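(* Let $k,n\in\mathbb N$, $\xi=(\xi_1,\dots,\xi_k)\in\mathcal P_0^k$ with $\xi_1=z$, and $\gamma=\gamma(\xi)$. Then for every $\lambda\in(\gamma\mathbb D)^n$ and $1\le j\le n$, the formula $\phi_{\lambda,j}(a)=\sum_{m=0}^\infty P_{n,j,m}(\lambda)\alpha_m(a,\xi)$ defines a continuous linear functional $\phi_{\lambda,j}$ on $\mathcal A^{[k]}$. Moreover, $\phi_{\lambda,j}(u_1^{r-1})=\delta_{j,r}$ for $1\le j,r\le n$, and $I_{\xi,q_\lambda}=\bigcap_{j=1}^n\ker\phi_{\lambda,j}$, where $q_\lambda(z)=\prod_{j=1}^n(z-\lambda_j)$. Furthermore, for each $1\le j\le n$ the map $\lambda\mapsto\phi_{\lambda,j}$ from $(\gamma\mathbb D)^n$ to $(\mathcal A^{[k]})^*$ is norm continuous.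
   Context: $\mathbb D$ is the open unit disk, $\mathcal P_0=\{p\in\mathbb C[z]:p(0)=0\}$, $\mathbb Z_+=\{0,1,\dots\}$. $\mathcal A^{[k]}$ is the Banach algebra of power series $a=\sum_{n\in\mathbb Z_+^k}a_nu_1^{n_1}\cdots u_k^{n_k}$ with $\|a\|_{[k]}=\sum|a_n|<\infty$ (functions continuous on the closed polydisk, holomorphic on $\mathbb D^k$). For $\xi\in\mathcal P_0^k$, $\gamma(\xi)=\sup\{c>0:\xi_j(c\mathbb D)\subseteq\mathbb D,\ 1\le j\le k\}$, $\Phi_\xi(a)(z)=a(\xi_1(z),\dots,\xi_k(z))$ is holomorphic on $\gamma(\xi)\mathbb D$, and $\alpha_m(a,\xi)$ denotes its $m$-th Taylor coefficient at $0$: $\Phi_\xi(a)(z)=\sum_{m\ge0}\alpha_m(a,\xi)z^m$. For a nonzero polynomial $q$ with zeros in $\gamma(\xi)\mathbb D$, $I_{\xi,q}=\{a\in\mathcal A^{[k]}:\text{every zero of }q\text{ of order }i\text{ is a zero of }\Phi_\xi(a)\text{ of order}\ge i\}$. For $\lambda\in\mathbb C^n$, $M_n(\lambda)=(\lambda_j^{r-1})_{j,r=1}^n$ is the Vandermonde matrix, $M_{n,j,m}(\lambda)$ is $M_n(\lambda)$ with its $j$-th column replaced by $(\lambda_1^m,\dots,\lambda_n^m)^T$, and $P_{n,j,m}$ is the polynomial $\det M_{n,j,m}(\lambda)/\det M_n(\lambda)\in\mathbb C[\lambda_1,\dots,\lambda_n]$ (the division is exact). $\delta_{j,r}$ is the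 Kronecker delta. *)

theory Defs
  imports "HOL-Complex_Analysis.Complex_Analysis" "HOL-Computational_Algebra.Polynomial"
begin

text \<open>Multi-indices in Z_+^k, variables indexed 1..k (coordinates outside 1..k are 0).\<close>
definition MI :: "nat \<Rightarrow> (nat \<Rightarrow> nat) set" where
  "MI k = {n. \<forall>i. i \<notin> {1..k} \<longrightarrow> n i = 0}"

text \<open>The Banach algebra A^[k]: absolutely summable coefficient families.\<close>
definition Alg :: "nat \<Rightarrow> ((nat \<Rightarrow> nat) \<Rightarrow> complex) set" where
  "Alg k = {a. (\<forall>n. n \<notin> MI k \<longrightarrow> a n = 0) \<and> (\<lambda>n. norm (a n)) summable_on MI k}"

definition normA :: "nat \<Rightarrow> ((nat \<Rightarrow> nat) \<Rightarrow> complex) \<Rightarrow> real" where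
  "normA k a = (\<Sum>\<^sub>\<infinity>n\<in>MI k. norm (a n))"

definition dnorm :: "nat \<Rightarrow> (((nat \<Rightarrow> nat) \<Rightarrow> complex) \<Rightarrow> complex) \<Rightarrow> real" where
  "dnorm k f = Sup {norm (f a) | a. a \<in> Alg k \<and> normA k a \<le> 1}"

definition u1pow :: "nat \<Rightarrow> (nat \<Rightarrow> nat) \<Rightarrow> complex" where
  "u1pow r = (\<lambda>n. if n = (\<lambda>i. if i = 1 then r else 0) then 1 else 0)"

definition P0 :: "complex poly set" where
  "P0 = {p. poly p 0 = 0}"

definition gam :: "nat \<Rightarrow> (nat \<Rightarrow> complex poly) \<Rightarrow> real" where
  "gam k xi = Sup {c. c > 0 \<and> (\<forall>j\<in>{1..k}. poly (xi j) ` ball 0 c \<subseteq> ball 0 1)}"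

definition Phi :: "nat \<Rightarrow> (nat \<Rightarrow> complex poly) \<Rightarrow> ((nat \<Rightarrow> nat) \<Rightarrow> complex) \<Rightarrow> complex \<Rightarrow> complex" where
  "Phi k xi a z = (\<Sum>\<^sub>\<infinity>n\<in>MI k. a n * (\<Prod>i\<in>{1..k}. poly (xi i) z ^ n i))"

definition alpha :: "nat \<Rightarrow> (nat \<Rightarrow> complex poly) \<Rightarrow> ((nat \<Rightarrow> nat) \<Rightarrow> complex) \<Rightarrow> nat \<Rightarrow> complex" where
  "alpha k xi a m = (deriv ^^ m) (Phi k xi a) 0 / fact m"

definition det_n :: "nat \<Rightarrow> (nat \<Rightarrow> nat \<Rightarrow> complex) \<Rightarrow> complex" where
  "det_n n M = (\<Sum>p | p permutes {1..n}. of_int (sign p) * (\<Prod>i\<in>{1..n}. M i (p i)))"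

definition Vmat :: "(nat \<Rightarrow> complex) \<Rightarrow> nat \<Rightarrow> nat \<Rightarrow> complex" where
  "Vmat lam = (\<lambda>i r. lam i ^ (r - 1))"

definition Vmat_rep :: "nat \<Rightarrow> nat \<Rightarrow> (nat \<Rightarrow> complex) \<Rightarrow> nat \<Rightarrow> nat \<Rightarrow> complex" where
  "Vmat_rep j m lam = (\<lambda>i r. if r = j then lam i ^ m else lam i ^ (r - 1))"

text \<open>P_{n,j,m}: the polynomial det M_{n,j,m} / det M_n, characterised as the unique
  continuous function f with f * det M_n = det M_{n,j,m} everywhere.\<close>
definition Pnjm :: "nat \<Rightarrow> nat \<Rightarrow> nat \<Rightarrow> (nat \<Rightarrow> complex) \<Rightarrow> complex" where
  "Pnjm n j m = (THE f. continuous_on UNIV f \<and>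
      (\<forall>lam. f lam * det_n n (Vmat lam) = det_n n (Vmat_rep j m lam)))"

definition phi :: "nat \<Rightarrow> (nat \<Rightarrow> complex poly) \<Rightarrow> nat \<Rightarrow> nat \<Rightarrow> (nat \<Rightarrow> complex)
                     \<Rightarrow> ((nat \<Rightarrow> nat) \<Rightarrow> complex) \<Rightarrow> complex" where
  "phi k xi n j lam a = (\<Sum>m. Pnjm n j m lam * alpha k xi a m)"

definition q_lam :: "nat \<Rightarrow> (nat \<Rightarrow> complex) \<Rightarrow> complex poly" where
  "q_lam n lam = (\<Prod>j\<in>{1..n}. [:- lam j, 1:])"

definition Iideal :: "nat \<Rightarrow> (nat \<Rightarrow> complex poly) \<Rightarrow> complex poly \<Rightarrow> ((nat \<Rightarrow> nat) \<Rightarrow> complex) set" where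
  "Iideal k xi q = {a \<in> Alg k. \<forall>w. poly q w = 0 \<longrightarrow>
      (\<forall>l < order w q. (deriv ^^ l) (Phi k xi a) w = 0)}"

end

theory Submission
  imports Defs "Jordan_Normal_Form.Determinant"
begin


lemma q_lam_0[simp]: "q_lam 0 lam = 1" by (simp add: q_lam_def)

lemma q_lam_Suc: "q_lam (Suc n) lam = q_lam n lam * [:- lam (Suc n), 1:]"
  unfolding q_lam_def by (simp add: atLeastAtMostSuc_conv mult.commute)

lemma q_lam_nz: "q_lam n lam \<noteq> 0"
  unfolding q_lam_def by (simp add: prod_zero_iff)

lemma q_lam_deg: "degree (q_lam n lam) = n \<and> lead_coeff (q_lam n lam) = 1"
proof (induction n)
  case 0 then show ?case by simp
next
  case (Suc n)
  have "degree (q_lam (Suc n) lam) = degree (q_lam n lam) + 1"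
    unfolding q_lam_Suc by (subst degree_mult_eq) (auto simp: q_lam_nz)
  moreover have "lead_coeff (q_lam (Suc n) lam) = 1"
  proof -
    have A: "lead_coeff (q_lam n lam) = 1" using Suc.IH by (rule conjunct2)
    show ?thesis unfolding q_lam_Suc lead_coeff_mult by (simp only: A) simp
  qed
  ultimately show ?case using Suc by simp
qed

lemma q_lam_degree[simp]: "degree (q_lam n lam) = n" using q_lam_deg by blast
lemma q_lam_lead[simp]: "coeff (q_lam n lam) n = 1"
proof -
  have "lead_coeff (q_lam n lam) = 1" using q_lam_deg by blast
  then show ?thesis by (metis q_lam_degree)
qed

lemma q_lam_root: "poly (q_lam n lam) w = 0 \<longleftrightarrow> (\<exists>i\<in>{1..n}. w = lam i)"
  unfolding q_lam_def poly_prod by (auto simp: prod_zero_iff)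

lemma q_lam_coeff_bound:
  assumes "0 \<le> r" "\<forall>i\<in>{1..n}. norm (lam i) \<le> r"
  shows "norm (coeff (q_lam n lam) i) \<le> (1 + r) ^ n"
  using assms
proof (induction n arbitrary: i)
  case 0 then show ?case by (simp add: coeff_1 )
next
  case (Suc n)
  have IH: "norm (coeff (q_lam n lam) i) \<le> (1 + r) ^ n" for i using Suc by auto
  have l: "norm (lam (Suc n)) \<le> r" using Suc by auto
  have c: "coeff (q_lam (Suc n) lam) i = - lam (Suc n) * coeff (q_lam n lam) i + coeff (pCons 0 (q_lam n lam)) i"
    unfolding q_lam_Suc by simp
  have "norm (coeff (pCons 0 (q_lam n lam)) i) \<le> (1+r)^n"
    using IH[of "i - 1"] Suc.prems(1) by (auto simp: coeff_pCons')
  moreover have "norm (- lam (Suc n) * coeff (q_lam n lam) i) \<le> r * (1+r)^n"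
    using IH[of i] l Suc.prems(1) by (simp add: norm_mult) (rule mult_mono, auto)
  ultimately have "norm (coeff (q_lam (Suc n) lam) i) \<le> r * (1+r)^n + (1+r)^n"
    unfolding c by (meson norm_triangle_mono)
  then show ?case by (simp add: algebra_simps)
qed

definition RR :: "nat \<Rightarrow> (nat \<Rightarrow> complex) \<Rightarrow> nat \<Rightarrow> complex poly" where
  "RR n lam m = [:0,1:]^m mod q_lam n lam"

lemma deg_lt_of_coeff: "(\<forall>i\<ge>n. coeff p i = 0) \<Longrightarrow> p \<noteq> 0 \<Longrightarrow> degree p < n"
proof (rule ccontr)
  assume h: "\<forall>i\<ge>n. coeff p i = 0" and p: "p \<noteq> 0" and "\<not> degree p < n"
  then have "coeff p (degree p) = 0" by simp
  then show False using p by simp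
qed

lemma RR_coeff_high: "n \<le> i \<Longrightarrow> coeff (RR n lam m) i = 0"
proof (cases "RR n lam m = 0")
  case False
  then have "degree (RR n lam m) < n"
    using degree_mod_less'[OF q_lam_nz, of "[:0,1:]^m" n lam] unfolding RR_def by simp
  then show "n \<le> i \<Longrightarrow> ?thesis" by (simp add: coeff_eq_0)
qed simp

lemma RR_dvd: "q_lam n lam dvd ([:0,1:]^m - RR n lam m)"
  unfolding RR_def minus_mod_eq_mult_div by (rule dvd_triv_left)

lemma RR_unique:
  assumes "\<forall>i\<ge>n. coeff A i = 0" "q_lam n lam dvd ([:0,1:]^m - A)"
  shows "A = RR n lam m"
proof (rule ccontr)
  assume ne: "A \<noteq> RR n lam m"
  let ?D = "RR n lam m - A"
  have qD: "q_lam n lam dvd ?D"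
  proof -
    have eqd: "?D = ([:0,1:]^m - A) - ([:0,1:]^m - RR n lam m)" by simp
    show ?thesis unfolding eqd by (rule dvd_diff[OF assms(2) RR_dvd])
  qed
  moreover have D0: "?D \<noteq> 0" using ne by simp
  have "n \<le> degree ?D" using dvd_imp_degree_le[OF qD D0] by simp
  moreover have "degree ?D < n"
    by (rule deg_lt_of_coeff) (use assms(1) RR_coeff_high D0 in auto)
  ultimately show False by simp
qed

lemma RR_0[simp]: "RR 0 lam m = 0" by (simp add: RR_def)

lemma RR_m0: "0 < n \<Longrightarrow> RR n lam 0 = 1"
  by (rule RR_unique[symmetric]) (auto simp: coeff_1)

lemma RR_Suc_m:
  assumes "0 < n"
  shows "RR n lam (Suc m) = pCons 0 (RR n lam m) - Polynomial.smult (coeff (RR n lam m) (n-1)) (q_lam n lam)"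
proof (rule RR_unique[symmetric])
  show "\<forall>i\<ge>n. coeff (pCons 0 (RR n lam m) - Polynomial.smult (coeff (RR n lam m) (n - 1)) (q_lam n lam)) i = 0"
  proof (intro allI impI)
    fix i assume i: "n \<le> i"
    show "coeff (pCons 0 (RR n lam m) - Polynomial.smult (coeff (RR n lam m) (n - 1)) (q_lam n lam)) i = 0"
    proof (cases "i = n")
      case True then show ?thesis using assms by (simp add: coeff_pCons')
    next
      case False
      then have "coeff (q_lam n lam) i = 0" using i by (simp add: coeff_eq_0)
      moreover have "coeff (RR n lam m) (i - 1) = 0" using i False by (intro RR_coeff_high) auto
      ultimately show ?thesis using assms i by (simp add: coeff_pCons')
    qed
  qed
  have eqx: "[:0, 1:] ^ Suc m - (pCons 0 (RR n lam m) - Polynomial.smult (coeff (RR n lam m) (n - 1)) (q_lam n lam))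
     = [:0,1:] * ([:0,1:]^m - RR n lam m) + Polynomial.smult (coeff (RR n lam m) (n - 1)) (q_lam n lam)"
    by (simp add: algebra_simps)
  show "q_lam n lam dvd [:0, 1:] ^ Suc m - (pCons 0 (RR n lam m) - Polynomial.smult (coeff (RR n lam m) (n - 1)) (q_lam n lam))"
  proof -
    have d1: "q_lam n lam dvd [:0,1:] * ([:0,1:]^m - RR n lam m)" using RR_dvd by (rule dvd_mult)
    have d2: "q_lam n lam dvd Polynomial.smult (coeff (RR n lam m) (n - 1)) (q_lam n lam)"
      by (rule Polynomial.dvd_smult) simp
    show ?thesis unfolding eqx by (rule dvd_add[OF d1 d2])
  qed
qed

lemma RR_Suc_n:
  "RR (Suc n) lam m = RR n lam m + Polynomial.smult (coeff (RR (Suc n) lam m) n) (q_lam n lam)"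
proof -
  let ?c = "coeff (RR (Suc n) lam m) n"
  have "RR (Suc n) lam m - Polynomial.smult ?c (q_lam n lam) = RR n lam m"
  proof (rule RR_unique)
    show "\<forall>i\<ge>n. coeff (RR (Suc n) lam m - Polynomial.smult ?c (q_lam n lam)) i = 0"
    proof (intro allI impI)
      fix i assume i: "n \<le> i"
      show "coeff (RR (Suc n) lam m - Polynomial.smult ?c (q_lam n lam)) i = 0"
      proof (cases "i = n")
        case True then show ?thesis by simp
      next
        case False
        then show ?thesis using i by (simp add: coeff_eq_0 RR_coeff_high)
      qed
    qed
    have "[:0, 1:] ^ m - (RR (Suc n) lam m - Polynomial.smult ?c (q_lam n lam)) =
      ([:0, 1:] ^ m - RR (Suc n) lam m) + Polynomial.smult ?c (q_lam n lam)" by simp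
    moreover have "q_lam n lam dvd ([:0, 1:] ^ m - RR (Suc n) lam m)"
      using RR_dvd[of "Suc n" lam m] unfolding q_lam_Suc using dvd_mult_left by blast
    ultimately show "q_lam n lam dvd [:0, 1:] ^ m - (RR (Suc n) lam m - Polynomial.smult ?c (q_lam n lam))"
      by (metis dvd_add Polynomial.dvd_smult dvd_refl)
  qed
  then show ?thesis by (metis diff_add_cancel)
qed

lemma TT_rec:
  "coeff (RR (Suc n) lam (Suc m)) n = coeff (RR n lam m) (n - 1) + lam (Suc n) * coeff (RR (Suc n) lam m) n"
proof -
  let ?c = "coeff (RR (Suc n) lam m) n"
  have e1: "coeff (RR (Suc n) lam (Suc m)) n = coeff (pCons 0 (RR (Suc n) lam m)) n - ?c * coeff (q_lam (Suc n) lam) n"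
    by (subst RR_Suc_m) auto
  have e2: "coeff (q_lam (Suc n) lam) n = - lam (Suc n) + coeff (pCons 0 (q_lam n lam)) n"
    unfolding q_lam_Suc by simp
  show ?thesis
  proof (cases n)
    case 0 then show ?thesis using e1 e2 by simp
  next
    case (Suc n')
    have "coeff (pCons 0 (RR (Suc n) lam m)) n = coeff (RR n lam m) (n - 1) + ?c * coeff (q_lam n lam) (n - 1)"
      using Suc by (subst RR_Suc_n) simp
    then have "coeff (RR (Suc n) lam (Suc m)) n = coeff (RR n lam m) (n - 1) + ?c * coeff (q_lam n lam) (n - 1)
         - ?c * (- lam (Suc n) + coeff (q_lam n lam) (n - 1))"
      using e1 e2 Suc by simp
    then show ?thesis by (simp add: algebra_simps)
  qed
qed


lemma RR_bound:
  assumes "0 \<le> r" "r < s"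
  shows "\<exists>K\<ge>0. \<forall>lam. (\<forall>i\<in>{1..n}. norm (lam i) \<le> r) \<longrightarrow> (\<forall>m i. norm (coeff (RR n lam m) i) \<le> K * s^m)"
proof (induction n)
  case 0 show ?case by (intro exI[of _ 0]) simp
next
  case (Suc n)
  obtain K where K: "K \<ge> 0" "\<forall>lam. (\<forall>i\<in>{1..n}. norm (lam i) \<le> r) \<longrightarrow> (\<forall>m i. norm (coeff (RR n lam m) i) \<le> K * s^m)"
    using Suc.IH by blast
  have sr: "0 < s - r" using assms by simp
  define B where "B = max 1 (K / (s - r))"
  have B1: "1 \<le> B" unfolding B_def by simp
  have B2: "K \<le> (s - r) * B"
  proof -
    have "K / (s - r) \<le> B" unfolding B_def by simp
    then show ?thesis using sr by (simp add: field_simps mult.commute)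
  qed
  have s0: "0 < s" using assms by simp
  show ?case
  proof (intro exI[of _ "K + B * (1+r)^n"] conjI allI impI)
    show "0 \<le> K + B*(1+r)^n" using K(1) B1 assms(1) by simp
    fix lam :: "nat \<Rightarrow> complex" and m i assume lam: "\<forall>i\<in>{1..Suc n}. norm (lam i) \<le> r"
    have lamn: "\<forall>i\<in>{1..n}. norm (lam i) \<le> r" using lam by auto
    have ls: "norm (lam (Suc n)) \<le> r" using lam by auto
    have T: "norm (coeff (RR (Suc n) lam m) n) \<le> B * s^m" for m
    proof (induction m)
      case 0 then show ?case using B1 by (simp add: RR_m0)
    next
      case (Suc m)
      have "norm (coeff (RR (Suc n) lam (Suc m)) n) \<le> norm (coeff (RR n lam m) (n - 1)) + norm (lam (Suc n)) * norm (coeff (RR (Suc n) lam m) n)"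
        unfolding TT_rec by (metis norm_mult norm_triangle_ineq)
      also have "\<dots> \<le> K * s^m + r * (B * s^m)"
        using K(2) lamn Suc.IH ls assms(1) by (intro add_mono mult_mono) auto
      also have "\<dots> \<le> (s - r) * B * s^m + r * (B * s^m)"
        using B2 s0 B1 by (intro add_mono mult_right_mono) auto
      also have "\<dots> = B * s ^ Suc m" by (simp add: algebra_simps)
      finally show ?case .
    qed
    have "coeff (RR (Suc n) lam m) i = coeff (RR n lam m) i + coeff (RR (Suc n) lam m) n * coeff (q_lam n lam) i"
      by (subst RR_Suc_n) simp
    then have "norm (coeff (RR (Suc n) lam m) i) \<le> norm (coeff (RR n lam m) i) + norm (coeff (RR (Suc n) lam m) n) * norm (coeff (q_lam n lam) i)"
      by (metis norm_mult norm_triangle_ineq)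
    also have "\<dots> \<le> K * s^m + (B * s^m) * (1+r)^n"
      using K(2) lamn T q_lam_coeff_bound[OF assms(1) lamn] B1 s0 by (intro add_mono mult_mono) auto
    finally show "norm (coeff (RR (Suc n) lam m) i) \<le> (K + B * (1 + r) ^ n) * s ^ m"
      by (simp add: algebra_simps)
  qed
qed

lemma q_lam_coeff_Suc: "coeff (q_lam (Suc n) lam) i = - lam (Suc n) * coeff (q_lam n lam) i + (if i = 0 then 0 else coeff (q_lam n lam) (i - 1))"
  unfolding q_lam_Suc by (simp add: coeff_pCons')

lemma q_lam_coeff_tendsto:
  assumes "\<forall>i\<in>{1..n}. ((\<lambda>x. g x i) \<longlongrightarrow> lam0 i) F"
  shows "((\<lambda>x. coeff (q_lam n (g x)) i) \<longlongrightarrow> coeff (q_lam n lam0) i) F"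
  using assms
proof (induction n arbitrary: i)
  case 0 then show ?case by simp
next
  case (Suc n)
  have IH: "((\<lambda>x. coeff (q_lam n (g x)) i) \<longlongrightarrow> coeff (q_lam n lam0) i) F" for i using Suc by auto
  have l: "((\<lambda>x. g x (Suc n)) \<longlongrightarrow> lam0 (Suc n)) F" using Suc.prems by auto
  show ?case unfolding q_lam_coeff_Suc
    by (cases "i = 0") (auto intro!: tendsto_intros l IH)
qed

lemma RR_coeff_Suc: "0 < n \<Longrightarrow> coeff (RR n lam (Suc m)) i =
   (if i = 0 then 0 else coeff (RR n lam m) (i - 1)) - coeff (RR n lam m) (n - 1) * coeff (q_lam n lam) i"
  by (subst RR_Suc_m) (auto simp: coeff_pCons')

lemma RR_coeff_tendsto:
  assumes "\<forall>i\<in>{1..n}. ((\<lambda>x. g x i) \<longlongrightarrow> lam0 i) F"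
  shows "((\<lambda>x. coeff (RR n (g x) m) i) \<longlongrightarrow> coeff (RR n lam0 m) i) F"
proof (cases "n = 0")
  case True then show ?thesis by simp
next
  case False
  then have n0: "0 < n" by simp
  then show ?thesis
  proof (induction m arbitrary: i)
    case 0 then show ?case by (simp add: RR_m0)
  next
    case (Suc m)
    have IH: "((\<lambda>x. coeff (RR n (g x) m) i) \<longlongrightarrow> coeff (RR n lam0 m) i) F" for i using Suc by auto
    show ?case unfolding RR_coeff_Suc[OF n0]
      by (cases "i = 0") (auto intro!: tendsto_intros IH q_lam_coeff_tendsto assms)
  qed
qed


definition Jm :: "nat \<Rightarrow> (nat \<Rightarrow> nat \<Rightarrow> complex) \<Rightarrow> complex Matrix.mat" where
  "Jm n M = Matrix.mat n n (\<lambda>(i,r). M (Suc i) (Suc r))"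

lemma Jm_carrier: "Jm n M \<in> carrier_mat n n" unfolding Jm_def by simp

lemma det_n_Jm: "det_n n M = Determinant.det (Jm n M)"
proof -
  let ?h = "\<lambda>\<pi> x. if x \<in> {1..n} then Suc (\<pi> (inv_into {0..<n} Suc x)) else x"
  have im: "Suc ` {0..<n} = {1..n}" by (auto simp: image_iff)
  have bij: "bij_betw Suc {0..<n} {1..n}" unfolding bij_betw_def using im by simp
  have bb: "bij_betw ?h {\<pi>. \<pi> permutes {0..<n}} {\<pi>. \<pi> permutes {1..n}}"
    using bij_betw_permutations[OF bij] by simp
  have hmp: "?h \<pi> = map_permutation {0..<n} Suc \<pi>" for \<pi>
    unfolding map_permutation_def restrict_id_def im by (auto simp: fun_eq_iff)
  have det_n: "det_n n M = (\<Sum>\<pi> | \<pi> permutes {0..<n}. of_int (sign (?h \<pi>)) * (\<Prod>i\<in>{1..n}. M i (?h \<pi> i)))"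
    unfolding det_n_def by (rule sum.reindex_bij_betw[OF bb, symmetric])
  also have "\<dots> = (\<Sum>\<pi> | \<pi> permutes {0..<n}. of_int (sign \<pi>) * (\<Prod>i = 0..<n. M (Suc i) (Suc (\<pi> i))))"
  proof (rule sum.cong[OF refl])
    fix \<pi> assume "\<pi> \<in> {\<pi>. \<pi> permutes {0..<n}}"
    then have p: "\<pi> permutes {0..<n}" by simp
    have "sign (?h \<pi>) = sign \<pi>" unfolding hmp by (rule sign_map_permutation) (use p in auto)
    moreover have "(\<Prod>i\<in>{1..n}. M i (?h \<pi> i)) = (\<Prod>i = 0..<n. M (Suc i) (Suc (\<pi> i)))"
    proof -
      have "(\<Prod>i\<in>{1..n}. M i (?h \<pi> i)) = (\<Prod>i\<in>Suc ` {0..<n}. M i (?h \<pi> i))" using im by simp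
      also have "\<dots> = (\<Prod>i = 0..<n. M (Suc i) (?h \<pi> (Suc i)))" by (subst prod.reindex) auto
      also have "\<dots> = (\<Prod>i = 0..<n. M (Suc i) (Suc (\<pi> i)))"
      proof (rule prod.cong[OF refl])
        fix i assume i: "i \<in> {0..<n}"
        have "?h \<pi> (Suc i) = map_permutation {0..<n} Suc \<pi> (Suc i)" using fun_cong[OF hmp[of \<pi>], of "Suc i"] by simp
        also have "\<dots> = Suc (\<pi> i)" by (rule map_permutation_apply) (use i in auto)
        finally show "M (Suc i) (?h \<pi> (Suc i)) = M (Suc i) (Suc (\<pi> i))" by simp
      qed
      finally show ?thesis .
    qed
    ultimately show "of_int (sign (?h \<pi>)) * (\<Prod>i\<in>{1..n}. M i (?h \<pi> i)) =
        of_int (sign \<pi>) * (\<Prod>i = 0..<n. M (Suc i) (Suc (\<pi> i)))" by simp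
  qed
  also have "\<dots> = Determinant.det (Jm n M)"
  proof -
    have "Determinant.det (Jm n M) = (\<Sum>p \<in> {p. p permutes {0 ..< n}}. of_int (sign p) * (\<Prod> i = 0 ..< n. Jm n M $$ (i, p i)))"
      by (rule det_def'[OF Jm_carrier])
    also have "\<dots> = (\<Sum>p \<in> {p. p permutes {0 ..< n}}. of_int (sign p) * (\<Prod> i = 0 ..< n. M (Suc i) (Suc (p i))))"
    proof (rule sum.cong[OF refl])
      fix p assume "p \<in> {p. p permutes {0..<n}}"
      then have p: "p permutes {0..<n}" by simp
      have "p i < n" if "i < n" for i using permutes_in_image[OF p] that by auto
      then show "of_int (sign p) * (\<Prod> i = 0 ..< n. Jm n M $$ (i, p i)) = of_int (sign p) * (\<Prod> i = 0 ..< n. M (Suc i) (Suc (p i)))"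
        unfolding Jm_def by (auto intro!: prod.cong)
    qed
    finally show ?thesis by simp
  qed
  finally show ?thesis .
qed


lemma poly_sum_lt: "(\<forall>i\<ge>n. coeff (p::complex poly) i = 0) \<Longrightarrow> poly p x = (\<Sum>i<n. coeff p i * x^i)"
proof (cases "p = 0")
  case False
  assume h: "\<forall>i\<ge>n. coeff p i = 0"
  then have d: "degree p < n" using deg_lt_of_coeff False by blast
  have "poly p x = (\<Sum>i\<le>degree p. coeff p i * x^i)" by (rule poly_altdef)
  also have "\<dots> = (\<Sum>i<n. coeff p i * x^i)"
    by (rule sum.mono_neutral_left) (use d h in \<open>auto intro: le_degree\<close>)
  finally show ?thesis .
qed simp

lemma RR_poly_root: "i \<in> {1..n} \<Longrightarrow> poly (RR n lam m) (lam i) = lam i ^ m"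
proof -
  assume i: "i \<in> {1..n}"
  obtain k where "[:0,1:]^m - RR n lam m = q_lam n lam * k" using RR_dvd by (metis dvdE)
  then have "poly ([:0,1:]^m - RR n lam m) (lam i) = 0" using i by (auto simp: q_lam_root)
  then show ?thesis by simp
qed

lemma Jm_mult: "1 \<le> j \<Longrightarrow> j \<le> n \<Longrightarrow>
  Jm n (Vmat_rep j m lam) = Jm n (Vmat lam) * Matrix.mat n n (\<lambda>(s,r). if r = j - 1 then coeff (RR n lam m) s else of_bool (s = r))"
proof (rule eq_matI)
  assume j: "1 \<le> j" "j \<le> n"
  fix i r assume ir: "i < dim_row (Jm n (Vmat lam) * Matrix.mat n n (\<lambda>(s,r). if r = j - 1 then coeff (RR n lam m) s else of_bool (s = r)))"
    "r < dim_col (Jm n (Vmat lam) * Matrix.mat n n (\<lambda>(s,r). if r = j - 1 then coeff (RR n lam m) s else of_bool (s = r)))"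
  then have i: "i < n" and r: "r < n" by (auto simp: Jm_def)
  have "(Jm n (Vmat lam) * Matrix.mat n n (\<lambda>(s,r). if r = j - 1 then coeff (RR n lam m) s else of_bool (s = r))) $$ (i, r)
     = (\<Sum>s<n. lam (Suc i) ^ s * (if r = j - 1 then coeff (RR n lam m) s else of_bool (s = r)))"
    using i r by (simp add: Jm_def Vmat_def Matrix.scalar_prod_def lessThan_atLeast0)
  also have "\<dots> = Jm n (Vmat_rep j m lam) $$ (i, r)"
  proof (cases "r = j - 1")
    case True
    have "(\<Sum>s<n. lam (Suc i) ^ s * coeff (RR n lam m) s) = poly (RR n lam m) (lam (Suc i))"
      by (subst poly_sum_lt[of n]) (auto simp: RR_coeff_high mult.commute)
    also have "\<dots> = lam (Suc i) ^ m" using i by (intro RR_poly_root) auto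
    finally show ?thesis using True i r j by (simp add: Jm_def Vmat_rep_def)
  next
    case False
    have "(\<Sum>s<n. lam (Suc i) ^ s * of_bool (s = r)) = lam (Suc i) ^ r"
      using r by (simp add: of_bool_def if_distrib sum.delta cong: if_cong)
    moreover have "Suc r \<noteq> j" using False j by auto
    ultimately show ?thesis using False i r j by (simp add: Jm_def Vmat_rep_def)
  qed
  finally show "Jm n (Vmat_rep j m lam) $$ (i, r) = (Jm n (Vmat lam) * Matrix.mat n n (\<lambda>(s,r). if r = j - 1 then coeff (RR n lam m) s else of_bool (s = r))) $$ (i, r)" by simp
next
  show "dim_row (Jm n (Vmat_rep j m lam)) = dim_row (Jm n (Vmat lam) * Matrix.mat n n (\<lambda>(s,r). if r = j - 1 then coeff (RR n lam m) s else of_bool (s = r)))"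
    by (simp add: Jm_def)
  show "dim_col (Jm n (Vmat_rep j m lam)) = dim_col (Jm n (Vmat lam) * Matrix.mat n n (\<lambda>(s,r). if r = j - 1 then coeff (RR n lam m) s else of_bool (s = r)))"
    by (simp add: Jm_def)
qed

lemma det_Bmat:
  assumes "j0 < n"
  shows "Determinant.det (Matrix.mat n n (\<lambda>(s,r). if r = j0 then c s else of_bool (s = r))) = (c j0 :: complex)"
proof -
  let ?B = "Matrix.mat n n (\<lambda>(s,r). if r = j0 then c s else of_bool (s = r)) :: complex Matrix.mat"
  have "Determinant.det ?B = (\<Sum>p \<in> {p. p permutes {0 ..< n}}. of_int (sign p) * (\<Prod> i = 0 ..< n. ?B $$ (i, p i)))"
    by (rule det_def') simp
  also have "\<dots> = of_int (sign (id::nat\<Rightarrow>nat)) * (\<Prod> i = 0 ..< n. ?B $$ (i, id i))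
      + (\<Sum>p \<in> {p. p permutes {0 ..< n}} - {id}. of_int (sign p) * (\<Prod> i = 0 ..< n. ?B $$ (i, p i)))"
    by (rule sum.remove) (auto simp: finite_permutations permutes_id)
  also have "(\<Sum>p \<in> {p. p permutes {0 ..< n}} - {id}. of_int (sign p) * (\<Prod> i = 0 ..< n. ?B $$ (i, p i))) = 0"
  proof (rule sum.neutral, rule ballI)
    fix p assume p: "p \<in> {p. p permutes {0 ..< n}} - {id}"
    then have pp: "p permutes {0..<n}" and pid: "p \<noteq> id" by auto
    obtain i where i: "p i \<noteq> i" using pid by (metis eq_id_iff)
    then have il: "i < n" using permutes_not_in[OF pp] by fastforce
    have pil: "p i < n" using permutes_in_image[OF pp] il by simp
    have "\<exists>i0<n. ?B $$ (i0, p i0) = 0"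
    proof (cases "p i = j0")
      case False then show ?thesis using il pil i by (intro exI[of _ i]) auto
    next
      case True
      have "p j0 \<noteq> j0" using True i permutes_inj[OF pp] by (metis injD)
      moreover have "p j0 < n" using permutes_in_image[OF pp] assms by simp
      ultimately show ?thesis using assms by (intro exI[of _ j0]) auto
    qed
    then show "of_int (sign p) * (\<Prod> i = 0 ..< n. ?B $$ (i, p i)) = 0"
      by (auto intro!: prod_zero)
  qed
  also have "of_int (sign (id::nat\<Rightarrow>nat)) * (\<Prod> i = 0 ..< n. ?B $$ (i, id i)) + 0 = (\<Prod> i = 0 ..< n. ?B $$ (i, i))"
    by simp
  also have "\<dots> = (\<Prod> i = 0 ..< n. if i = j0 then c i else 1)"
    by (rule prod.cong) auto
  also have "\<dots> = c j0" using assms by (simp add: prod.delta)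
  finally show ?thesis .
qed

lemma det_identity: "1 \<le> j \<Longrightarrow> j \<le> n \<Longrightarrow>
  coeff (RR n lam m) (j - 1) * det_n n (Vmat lam) = det_n n (Vmat_rep j m lam)"
proof -
  assume j: "1 \<le> j" "j \<le> n"
  let ?B = "Matrix.mat n n (\<lambda>(s,r). if r = j - 1 then coeff (RR n lam m) s else of_bool (s = r)) :: complex Matrix.mat"
  have "det_n n (Vmat_rep j m lam) = Determinant.det (Jm n (Vmat lam) * ?B)"
    unfolding det_n_Jm Jm_mult[OF j] ..
  also have "\<dots> = Determinant.det (Jm n (Vmat lam)) * Determinant.det ?B"
    by (rule det_mult[OF Jm_carrier]) simp
  also have "Determinant.det ?B = coeff (RR n lam m) (j - 1)"
    by (rule det_Bmat) (use j in simp)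
  finally show ?thesis by (simp add: det_n_Jm)
qed

lemma vandermonde_nz:
  assumes "inj_on lam {1..n}"
  shows "det_n n (Vmat lam) \<noteq> 0"
proof
  assume "det_n n (Vmat lam) = 0"
  then have "Determinant.det (Jm n (Vmat lam)) = 0" by (simp add: det_n_Jm)
  then obtain v where v: "v \<in> carrier_vec n" "v \<noteq> 0\<^sub>v n" "Jm n (Vmat lam) *\<^sub>v v = 0\<^sub>v n"
    using det_0_iff_vec_prod_zero[OF Jm_carrier] by blast
  define p where "p = (\<Sum>s<n. monom (vec_index v s) s)"
  have cp: "coeff p i = (if i < n then vec_index v i else 0)" for i
    unfolding p_def by (simp add: coeff_sum)
  have pv: "poly p x = (\<Sum>s<n. vec_index v s * x ^ s)" for x
    unfolding p_def by (simp add: poly_sum poly_monom)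
  have roots: "poly p (lam i) = 0" if "i \<in> {1..n}" for i
  proof -
    have i1: "i - 1 < n" and i2: "Suc (i - 1) = i" using that by auto
    then have "vec_index (Jm n (Vmat lam) *\<^sub>v v) (i - 1) = 0" using v(3) by simp
    moreover have "vec_index (Jm n (Vmat lam) *\<^sub>v v) (i - 1) = (\<Sum>s<n. lam i ^ s * vec_index v s)"
      using i1 i2 v(1) by (simp add: Jm_def Vmat_def Matrix.scalar_prod_def lessThan_atLeast0)
    ultimately show ?thesis unfolding pv by (simp add: mult.commute)
  qed
  have p0: "p = 0"
  proof (rule ccontr)
    assume "p \<noteq> 0"
    then have "degree p < n" by (intro deg_lt_of_coeff) (auto simp: cp)
    moreover have "card (lam ` {1..n}) = n" using card_image[OF assms] by simp
    ultimately have "p = 0" by (intro poly_eqI_degree[of "lam ` {1..n}"]) (auto simp: roots)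
    with \<open>p \<noteq> 0\<close> show False by simp
  qed
  have "v = 0\<^sub>v n"
  proof (rule eq_vecI)
    fix i assume "i < dim_vec (0\<^sub>v n :: complex Matrix.vec)"
    then have "i < n" by simp
    then show "vec_index v i = vec_index (0\<^sub>v n) i" using cp[of i] p0 by simp
  qed (use v(1) in simp)
  with v(2) show False by simp
qed


lemma proj_tendsto: "((\<lambda>y::nat\<Rightarrow>complex. y i) \<longlongrightarrow> x i) (at x within S)"
proof -
  have "continuous_on UNIV (\<lambda>y::nat\<Rightarrow>complex. y i)" by simp
  then have "((\<lambda>y::nat\<Rightarrow>complex. y i) \<longlongrightarrow> x i) (at x within UNIV)" unfolding continuous_on_def by simp
  then show ?thesis by (rule tendsto_within_subset) simp
qed

lemma eventually_not_finite_at0: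
  assumes "finite S"
  shows "eventually (\<lambda>t::real. t \<notin> S) (at 0)"
  unfolding eventually_at_topological
proof (intro exI conjI)
  show "open (- (S - {0}))" using assms by (intro open_Compl finite_imp_closed) auto
  show "(0::real) \<in> - (S - {0})" by simp
  show "\<forall>x\<in>- (S - {0}). x \<noteq> 0 \<longrightarrow> x \<in> UNIV \<longrightarrow> x \<notin> S" by auto
qed

lemma Pnjm_eq:
  assumes j: "1 \<le> j" "j \<le> n"
  shows "Pnjm n j m = (\<lambda>lam. coeff (RR n lam m) (j - 1))"
proof -
  let ?f = "\<lambda>lam. coeff (RR n lam m) (j - 1)"
  have cont: "continuous_on UNIV ?f"
    unfolding continuous_on_def
  proof
    fix x :: "nat \<Rightarrow> complex"
    show "(?f \<longlongrightarrow> ?f x) (at x within UNIV)"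
      using RR_coeff_tendsto[of n "\<lambda>y. y" x "at x within UNIV"]
      by (simp add: proj_tendsto)
  qed
  have idt: "\<forall>lam. ?f lam * det_n n (Vmat lam) = det_n n (Vmat_rep j m lam)"
    using det_identity[OF j] by blast
  show ?thesis unfolding Pnjm_def
  proof (rule the_equality)
    show "continuous_on UNIV ?f \<and> (\<forall>lam. ?f lam * det_n n (Vmat lam) = det_n n (Vmat_rep j m lam))"
      using cont idt by blast
    fix g assume g: "continuous_on UNIV g \<and> (\<forall>lam. g lam * det_n n (Vmat lam) = det_n n (Vmat_rep j m lam))"
    show "g = ?f"
    proof
      fix lam0 :: "nat \<Rightarrow> complex"
      define L where "L = (\<lambda>(t::real) (i::nat). lam0 i + of_real t * of_nat i)"
      have L0: "L 0 = lam0" unfolding L_def by simp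
      have Lc: "continuous_on UNIV L" unfolding L_def
        by (intro continuous_on_coordinatewise_then_product continuous_intros)
      have lim: "((\<lambda>t. h (L t)) \<longlongrightarrow> h lam0) (at 0)" if "continuous_on UNIV h" for h :: "(nat \<Rightarrow> complex) \<Rightarrow> complex"
      proof -
        have "continuous_on UNIV (h \<circ> L)" using continuous_on_compose[OF Lc] that
          by (metis continuous_on_subset subset_UNIV)
        then have "isCont (h \<circ> L) 0" by (simp add: continuous_on_eq_continuous_at o_def)
        then show ?thesis using L0 by (simp add: isCont_def o_def)
      qed
      define S where "S = (\<lambda>(i,j). Re ((lam0 j - lam0 i) / (of_nat i - of_nat j))) ` ({1..n}\<times>{1..n})"
      have "finite S" unfolding S_def by simp
      have ev: "eventually (\<lambda>t. g (L t) = ?f (L t)) (at 0)"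
        using eventually_not_finite_at0[OF \<open>finite S\<close>]
      proof eventually_elim
        case (elim t)
        have inj: "inj_on (L t) {1..n}"
        proof
          fix i i' assume i: "i \<in> {1..n}" "i' \<in> {1..n}" "L t i = L t i'"
          show "i = i'"
          proof (rule ccontr)
            assume ne: "i \<noteq> i'"
            then have nz: "(of_nat i - of_nat i' :: complex) \<noteq> 0" by simp
            have "of_real t * (of_nat i - of_nat i') = lam0 i' - lam0 i"
              using i(3) unfolding L_def by (simp add: algebra_simps)
            then have "of_real t = (lam0 i' - lam0 i) / (of_nat i - of_nat i')"
              using nz by (simp add: field_simps)
            then have "t = Re ((lam0 i' - lam0 i) / (of_nat i - of_nat i'))"
              by (metis Re_complex_of_real)
            then have "t \<in> S" unfolding S_def using i by auto
            with elim show False by simp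
          qed
        qed
        have D: "det_n n (Vmat (L t)) \<noteq> 0" by (rule vandermonde_nz[OF inj])
        have "g (L t) * det_n n (Vmat (L t)) = ?f (L t) * det_n n (Vmat (L t))"
          using g idt by simp
        then show ?case using D by simp
      qed
      have "((\<lambda>t. g (L t)) \<longlongrightarrow> ?f lam0) (at 0)"
        using tendsto_cong[OF ev] lim[OF cont] by simp
      moreover have "((\<lambda>t. g (L t)) \<longlongrightarrow> g lam0) (at 0)" using lim g by blast
      ultimately show "g lam0 = ?f lam0" using tendsto_unique[OF trivial_limit_at] by metis
    qed
  qed
qed


lemma poly_holo[holomorphic_intros]: "poly p holomorphic_on S"
  unfolding holomorphic_on_def field_differentiable_def
  using poly_DERIV has_field_derivative_at_within by blast

definition GS :: "nat \<Rightarrow> (nat \<Rightarrow> complex poly) \<Rightarrow> real set" where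
  "GS k xi = {c. c > 0 \<and> (\<forall>j\<in>{1..k}. poly (xi j) ` ball 0 c \<subseteq> ball 0 1)}"

context
  fixes k :: nat and xi :: "nat \<Rightarrow> complex poly"
  assumes k1: "1 \<le> k" and xiP0: "\<forall>j\<in>{1..k}. xi j \<in> P0" and xi1: "xi 1 = [:0,1:]"
begin

lemma GS_ne: "GS k xi \<noteq> {}"
proof -
  have "eventually (\<lambda>z. \<forall>j\<in>{1..k}. dist (poly (xi j) z) (poly (xi j) 0) < 1) (at (0::complex))"
  proof (rule eventually_ball_finite, simp, rule ballI)
    fix j
    have "((\<lambda>z. poly (xi j) z) \<longlongrightarrow> poly (xi j) 0) (at 0)" using poly_isCont isCont_def by blast
    then show "eventually (\<lambda>z. dist (poly (xi j) z) (poly (xi j) 0) < 1) (at 0)"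
      using tendstoD by fastforce
  qed
  then obtain d where d: "d > 0" "\<forall>z. z \<noteq> 0 \<and> dist z 0 < d \<longrightarrow> (\<forall>j\<in>{1..k}. dist (poly (xi j) z) (poly (xi j) 0) < 1)"
    unfolding eventually_at by auto
  have "d \<in> GS k xi"
    unfolding GS_def
  proof (intro CollectI conjI ballI subsetI d(1))
    fix j y assume j: "j \<in> {1..k}" and y: "y \<in> poly (xi j) ` ball 0 d"
    then obtain z where z: "dist 0 z < d" "y = poly (xi j) z" by auto
    have p0: "poly (xi j) 0 = 0" using xiP0 j unfolding P0_def by auto
    show "y \<in> ball 0 1"
    proof (cases "z = 0")
      case True then show ?thesis using z p0 by simp
    next
      case False
      have "dist (poly (xi j) z) (poly (xi j) 0) < 1" using d(2) False z j by (auto simp: dist_commute)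
      then show ?thesis using z p0 by simp
    qed
  qed
  then show ?thesis by blast
qed

lemma GS_le1: "c \<in> GS k xi \<Longrightarrow> c \<le> 1"
proof (rule ccontr)
  assume c: "c \<in> GS k xi" "\<not> c \<le> 1"
  then have "(1::complex) \<in> ball 0 c" by simp
  then have "poly (xi 1) 1 \<in> ball 0 1" using c k1 unfolding GS_def by fastforce
  then show False using xi1 by simp
qed

lemma GS_bdd: "bdd_above (GS k xi)" using GS_le1 by (intro bdd_aboveI) 

lemma gam_pos: "0 < gam k xi"
proof -
  obtain c where c: "c \<in> GS k xi" using GS_ne by blast
  then have "0 < c" unfolding GS_def by simp
  also have "c \<le> Sup (GS k xi)" using c GS_bdd by (rule cSup_upper)
  finally show ?thesis by (simp add: gam_def GS_def)
qed

lemma xi_lt1: "norm z < gam k xi \<Longrightarrow> j \<in> {1..k} \<Longrightarrow> norm (poly (xi j) z) < 1"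
proof -
  assume z: "norm z < gam k xi" and j: "j \<in> {1..k}"
  have "norm z < Sup (GS k xi)" using z by (simp add: gam_def GS_def)
  then obtain c where c: "c \<in> GS k xi" "norm z < c" using less_cSup_iff[OF GS_ne GS_bdd] by blast
  have "poly (xi j) ` ball 0 c \<subseteq> ball 0 1" using c(1) j unfolding GS_def by auto
  moreover have "z \<in> ball 0 c" using c(2) by simp
  ultimately have "poly (xi j) z \<in> ball 0 1" by blast
  then show ?thesis by simp
qed

lemma prod_bound: "norm z < gam k xi \<Longrightarrow> norm (\<Prod>i\<in>{1..k}. poly (xi i) z ^ n i) \<le> 1"
proof -
  assume z: "norm z < gam k xi"
  have "norm (\<Prod>i\<in>{1..k}. poly (xi i) z ^ n i) = (\<Prod>i\<in>{1..k}. norm (poly (xi i) z) ^ n i)"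
    by (simp add: prod_norm[symmetric] norm_power)
  also have "\<dots> \<le> 1"
    by (rule prod_le_1) (auto intro!: power_le_one less_imp_le[OF xi_lt1[OF z]])
  finally show ?thesis .
qed

lemma term_abs_summable:
  assumes a: "a \<in> Alg k" and z: "norm z < gam k xi"
  shows "(\<lambda>n. norm (a n * (\<Prod>i\<in>{1..k}. poly (xi i) z ^ n i))) summable_on MI k"
proof (rule Infinite_Sum.abs_summable_on_comparison_test)
  show "(\<lambda>n. norm (a n)) summable_on MI k" using a unfolding Alg_def by simp
  fix n show "norm (a n * (\<Prod>i\<in>{1..k}. poly (xi i) z ^ n i)) \<le> norm (a n)"
    using prod_bound[OF z, of n] by (simp add: norm_mult mult_left_le)
qed

lemma Phi_bound:
  assumes a: "a \<in> Alg k" and z: "norm z < gam k xi"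
  shows "norm (Phi k xi a z) \<le> normA k a"
proof -
  have "norm (Phi k xi a z) \<le> (\<Sum>\<^sub>\<infinity>n\<in>MI k. norm (a n * (\<Prod>i\<in>{1..k}. poly (xi i) z ^ n i)))"
    unfolding Phi_def by (rule norm_infsum_bound[OF term_abs_summable[OF a z]])
  also have "\<dots> \<le> (\<Sum>\<^sub>\<infinity>n\<in>MI k. norm (a n))"
    by (rule infsum_mono[OF term_abs_summable[OF a z]]) (use a prod_bound[OF z] in \<open>auto simp: Alg_def norm_mult mult_left_le\<close>)
  finally show ?thesis unfolding normA_def .
qed

lemma Phi_holo: 
  assumes a: "a \<in> Alg k"
  shows "Phi k xi a holomorphic_on ball 0 (gam k xi)"
proof -
  have "Phi k xi a field_differentiable (at w)" if w: "w \<in> ball 0 (gam k xi)" for w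
  proof -
    define \<rho> where "\<rho> = (norm w + gam k xi) / 2"
    have w\<rho>: "norm w < \<rho>" and \<rho>g: "\<rho> < gam k xi" using w unfolding \<rho>_def by auto
    have ul: "uniform_limit (cball 0 \<rho>) (\<lambda>X z. \<Sum>n\<in>X. a n * (\<Prod>i\<in>{1..k}. poly (xi i) z ^ n i))
         (\<lambda>z. \<Sum>\<^sub>\<infinity>n\<in>MI k. a n * (\<Prod>i\<in>{1..k}. poly (xi i) z ^ n i)) (finite_subsets_at_top (MI k))"
    proof (rule Weierstrass_m_test_general)
      show "(\<lambda>n. norm (a n)) summable_on MI k" using a unfolding Alg_def by simp
      fix n z assume "n \<in> MI k" "z \<in> cball (0::complex) \<rho>"
      then have "norm z < gam k xi" using \<rho>g by auto
      then show "norm (a n * (\<Prod>i\<in>{1..k}. poly (xi i) z ^ n i)) \<le> norm (a n)"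
        using prod_bound by (simp add: norm_mult mult_left_le)
    qed
    have "Phi k xi a holomorphic_on ball 0 \<rho>"
    proof (rule holomorphic_uniform_limit[OF _ ul])
      show "\<forall>\<^sub>F X in finite_subsets_at_top (MI k). continuous_on (cball 0 \<rho>) (\<lambda>z. \<Sum>n\<in>X. a n * (\<Prod>i\<in>{1..k}. poly (xi i) z ^ n i)) \<and>
          (\<lambda>z. \<Sum>n\<in>X. a n * (\<Prod>i\<in>{1..k}. poly (xi i) z ^ n i)) holomorphic_on ball 0 \<rho>"
        by (intro always_eventually allI conjI holomorphic_on_imp_continuous_on[of _ "cball 0 \<rho>"] holomorphic_intros)
      show "finite_subsets_at_top (MI k) \<noteq> bot" by simp
    qed (simp add: Phi_def[abs_def])
    then show ?thesis using w\<rho> by (intro holomorphic_on_imp_differentiable_at[of _ "ball 0 \<rho>"]) auto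
  qed
  then show ?thesis unfolding holomorphic_on_def using field_differentiable_at_within by blast
qed

end


context
  fixes k :: nat and xi :: "nat \<Rightarrow> complex poly"
  assumes k1: "1 \<le> k" and xiP0: "\<forall>j\<in>{1..k}. xi j \<in> P0" and xi1: "xi 1 = [:0,1:]"
begin

lemma normA_nonneg: "0 \<le> normA k a"
  unfolding normA_def by (rule infsum_nonneg) simp

lemma alpha_bound:
  assumes a: "a \<in> Alg k" and \<rho>: "0 < \<rho>" "\<rho> < gam k xi"
  shows "norm (alpha k xi a m) \<le> normA k a / \<rho>^m"
proof -
  have hol: "Phi k xi a holomorphic_on ball 0 (gam k xi)" by (rule Phi_holo[OF k1 xiP0 xi1 a])
  have sub: "cball 0 \<rho> \<subseteq> ball 0 (gam k xi)" using \<rho> by auto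
  have "norm ((deriv ^^ m) (Phi k xi a) 0) \<le> fact m * normA k a / \<rho>^m"
  proof (rule Cauchy_inequality)
    show "Phi k xi a holomorphic_on ball 0 \<rho>" using hol sub ball_subset_cball holomorphic_on_subset by blast
    show "continuous_on (cball 0 \<rho>) (Phi k xi a)"
      using holomorphic_on_imp_continuous_on[OF hol] sub continuous_on_subset by blast
    show "0 < \<rho>" by fact
    fix x :: complex assume "norm (0 - x) = \<rho>"
    then have "norm x < gam k xi" using \<rho> by simp
    then show "norm (Phi k xi a x) \<le> normA k a" by (rule Phi_bound[OF k1 xiP0 xi1 a])
  qed
  then show ?thesis unfolding alpha_def by (simp add: norm_divide field_simps)
qed

lemma alpha_sums:
  assumes a: "a \<in> Alg k" and z: "norm z < gam k xi"
  shows "(\<lambda>m. alpha k xi a m * z^m) sums Phi k xi a z"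
  using holomorphic_power_series[OF Phi_holo[OF k1 xiP0 xi1 a], of z] z
  unfolding alpha_def by simp

lemma Alg_add: "a \<in> Alg k \<Longrightarrow> b \<in> Alg k \<Longrightarrow> (\<lambda>x. a x + b x) \<in> Alg k"
proof -
  assume a: "a \<in> Alg k" and b: "b \<in> Alg k"
  have s: "(\<lambda>x. norm (a x) + norm (b x)) summable_on MI k"
    using a b unfolding Alg_def by (intro summable_on_add) auto
  have "(\<lambda>x. norm (a x + b x)) summable_on MI k"
    by (rule summable_on_comparison_test[OF s]) (auto intro: norm_triangle_ineq)
  then show ?thesis using a b unfolding Alg_def by auto
qed

lemma Alg_cmult: "a \<in> Alg k \<Longrightarrow> (\<lambda>x. c * a x) \<in> Alg k"
proof -
  assume a: "a \<in> Alg k"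
  have s: "(\<lambda>x. norm c * norm (a x)) summable_on MI k"
    using a unfolding Alg_def by (intro summable_on_cmult_right) auto
  have "(\<lambda>x. norm (c * a x)) summable_on MI k"
    by (rule summable_on_comparison_test[OF s]) (auto simp: norm_mult)
  then show ?thesis using a unfolding Alg_def by auto
qed

lemma Alg_diff: "a \<in> Alg k \<Longrightarrow> b \<in> Alg k \<Longrightarrow> (\<lambda>x. b x - a x) \<in> Alg k"
proof -
  assume a: "a \<in> Alg k" and b: "b \<in> Alg k"
  have "(\<lambda>x. b x + (-1) * a x) \<in> Alg k" by (intro Alg_add Alg_cmult a b)
  then show ?thesis by simp
qed

lemma term_summable:
  assumes a: "a \<in> Alg k" and z: "norm z < gam k xi"
  shows "(\<lambda>n. a n * (\<Prod>i\<in>{1..k}. poly (xi i) z ^ n i)) summable_on MI k"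
  using term_abs_summable[OF k1 xiP0 xi1 a z] by (rule abs_summable_summable)

lemma Phi_add:
  assumes a: "a \<in> Alg k" and b: "b \<in> Alg k" and z: "norm z < gam k xi"
  shows "Phi k xi (\<lambda>x. a x + b x) z = Phi k xi a z + Phi k xi b z"
  unfolding Phi_def distrib_right
  by (rule infsum_add[OF term_summable[OF a z] term_summable[OF b z]])

lemma Phi_cmult:
  shows "Phi k xi (\<lambda>x. c * a x) z = c * Phi k xi a z"
  unfolding Phi_def mult.assoc by (rule infsum_cmult_right')

lemma alpha_add:
  assumes a: "a \<in> Alg k" and b: "b \<in> Alg k"
  shows "alpha k xi (\<lambda>x. a x + b x) m = alpha k xi a m + alpha k xi b m"
proof -
  have ha: "Phi k xi a holomorphic_on ball 0 (gam k xi)" by (rule Phi_holo[OF k1 xiP0 xi1 a])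
  have hb: "Phi k xi b holomorphic_on ball 0 (gam k xi)" by (rule Phi_holo[OF k1 xiP0 xi1 b])
  have hab: "Phi k xi (\<lambda>x. a x + b x) holomorphic_on ball 0 (gam k xi)" by (rule Phi_holo[OF k1 xiP0 xi1 Alg_add[OF a b]])
  have g: "0 \<in> ball 0 (gam k xi)" using gam_pos[OF k1 xiP0 xi1] by simp
  have "(deriv ^^ m) (Phi k xi (\<lambda>x. a x + b x)) 0 = (deriv ^^ m) (\<lambda>z. Phi k xi a z + Phi k xi b z) 0"
    by (rule higher_deriv_transform_within_open[OF hab _ _ g]) (auto intro: holomorphic_intros ha hb Phi_add[OF a b])
  also have "\<dots> = (deriv ^^ m) (Phi k xi a) 0 + (deriv ^^ m) (Phi k xi b) 0"
    by (rule higher_deriv_add[OF ha hb _ g]) simp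
  finally show ?thesis unfolding alpha_def by (simp add: add_divide_distrib)
qed

lemma alpha_cmult:
  assumes a: "a \<in> Alg k"
  shows "alpha k xi (\<lambda>x. c * a x) m = c * alpha k xi a m"
proof -
  have ha: "Phi k xi a holomorphic_on ball 0 (gam k xi)" by (rule Phi_holo[OF k1 xiP0 xi1 a])
  have g: "0 \<in> ball 0 (gam k xi)" using gam_pos[OF k1 xiP0 xi1] by simp
  have "(deriv ^^ m) (Phi k xi (\<lambda>x. c * a x)) 0 = (deriv ^^ m) (\<lambda>z. c * Phi k xi a z) 0"
    unfolding Phi_cmult ..
  also have "\<dots> = c * (deriv ^^ m) (Phi k xi a) 0"
    by (rule higher_deriv_cmult[OF ha g]) simp
  finally show ?thesis unfolding alpha_def by simp
qed

end


lemma x_pow_monom: "([:0,1:]::complex poly)^s = monom 1 s"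
  by (simp add: monom_altdef)

lemma RR_small: "s < n \<Longrightarrow> RR n lam s = monom 1 s"
  by (rule RR_unique[symmetric]) (auto simp: x_pow_monom coeff_monom)

lemma higher_deriv_pow0: "(deriv ^^ m) (\<lambda>z::complex. z^s) 0 / fact m = (if m = s then 1 else 0)"
proof -
  have "(deriv ^^ m) (\<lambda>z::complex. (z - 0)^s) 0 = pochhammer (of_nat (Suc s - m)) m * (0 - 0) ^ (s - m)"
    by (rule higher_deriv_power)
  then have e: "(deriv ^^ m) (\<lambda>z::complex. z^s) 0 = pochhammer (of_nat (Suc s - m)) m * 0 ^ (s - m)" by simp
  show ?thesis
  proof (cases "m = s")
    case True then show ?thesis using e by (simp add: pochhammer_fact[symmetric] pochhammer_of_nat_eq_0_iff)
  next
    case False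
    show ?thesis
    proof (cases "m < s")
      case True then show ?thesis using e by simp
    next
      case False
      then have "Suc s - m = 0" "m > 0" using \<open>m \<noteq> s\<close> by auto
      then show ?thesis using e \<open>m \<noteq> s\<close> by (simp add: pochhammer_0_left)
    qed
  qed
qed

context
  fixes k :: nat and xi :: "nat \<Rightarrow> complex poly"
  assumes k1: "1 \<le> k" and xiP0: "\<forall>j\<in>{1..k}. xi j \<in> P0" and xi1: "xi 1 = [:0,1:]"
begin

lemma Phi_u1pow: "Phi k xi (u1pow s) = (\<lambda>z. z^s)"
proof
  fix z
  define e where "e = (\<lambda>i::nat. if i = 1 then s else 0)"
  have eM: "e \<in> MI k" using k1 unfolding MI_def e_def by auto
  have "Phi k xi (u1pow s) z = (\<Sum>\<^sub>\<infinity>n\<in>MI k. (if n = e then 1 else 0) * (\<Prod>i\<in>{1..k}. poly (xi i) z ^ n i))"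
    unfolding Phi_def u1pow_def e_def ..
  also have "\<dots> = (\<Sum>\<^sub>\<infinity>n\<in>{e}. (if n = e then 1 else 0) * (\<Prod>i\<in>{1..k}. poly (xi i) z ^ n i))"
    by (rule infsum_cong_neutral) (use eM in auto)
  also have "\<dots> = (\<Prod>i\<in>{1..k}. poly (xi i) z ^ e i)" by simp
  also have "\<dots> = (\<Prod>i\<in>{1..k}. if i = 1 then z ^ s else 1)"
    using xi1 by (intro prod.cong) (auto simp: e_def)
  also have "\<dots> = z ^ s" using k1 by (simp add: prod.delta)
  finally show "Phi k xi (u1pow s) z = z ^ s" .
qed

lemma alpha_u1pow: "alpha k xi (u1pow s) m = (if m = s then 1 else 0)"
  unfolding alpha_def Phi_u1pow by (rule higher_deriv_pow0)

lemma lam_consts: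
  fixes lam :: "nat \<Rightarrow> complex"
  assumes lam: "\<forall>i\<in>{1..n}. lam i \<in> ball 0 (gam k xi)"
  shows "\<exists>r R \<rho>. 0 \<le> r \<and> r < R \<and> R < \<rho> \<and> \<rho> < gam k xi \<and> (\<forall>i\<in>{1..n}. norm (lam i) \<le> r)"
proof -
  define r where "r = Max (insert 0 ((\<lambda>i. norm (lam i)) ` {1..n}))"
  have fin: "finite (insert 0 ((\<lambda>i. norm (lam i)) ` {1..n}))" by simp
  have r0: "0 \<le> r" unfolding r_def by (rule Max_ge[OF fin]) simp
  have rl: "\<forall>i\<in>{1..n}. norm (lam i) \<le> r"
  proof
    fix i assume "i \<in> {1..n}"
    then show "norm (lam i) \<le> r" unfolding r_def by (intro Max_ge[OF fin]) auto
  qed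
  have rg: "r < gam k xi" unfolding r_def using gam_pos[OF k1 xiP0 xi1] lam by (subst Max_less_iff[OF fin]) auto
  show ?thesis
    by (rule exI[of _ r], rule exI[of _ "(2*r + gam k xi)/3"], rule exI[of _ "(r + 2*gam k xi)/3"])
       (use r0 rl rg in auto)
qed

lemma phi_facts:
  assumes lam: "\<forall>i\<in>{1..n}. lam i \<in> ball 0 (gam k xi)" and j: "j \<in> {1..n}"
  shows "\<exists>C\<ge>0. \<forall>a\<in>Alg k. summable (\<lambda>m. Pnjm n j m lam * alpha k xi a m) \<and>
            norm (phi k xi n j lam a) \<le> C * normA k a"
proof -
  obtain r R \<rho> where c: "0 \<le> r" "r < R" "R < \<rho>" "\<rho> < gam k xi" "\<forall>i\<in>{1..n}. norm (lam i) \<le> r"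
    using lam_consts[OF lam] by blast
  obtain K where K: "K \<ge> 0" "\<forall>m i. norm (coeff (RR n lam m) i) \<le> K * R^m"
    using RR_bound[OF c(1) c(2), of n] c(5) by blast
  have P: "Pnjm n j m lam = coeff (RR n lam m) (j - 1)" for m using Pnjm_eq[of j n m] j by simp
  define t where "t = R / \<rho>"
  have t: "0 \<le> t" "t < 1" using c unfolding t_def by auto
  have \<rho>0: "0 < \<rho>" using c by simp
  show ?thesis
  proof (intro exI[of _ "K / (1 - t)"] conjI ballI)
    show "0 \<le> K / (1 - t)" using K t by simp
    fix a assume a: "a \<in> Alg k"
    have bnd: "norm (Pnjm n j m lam * alpha k xi a m) \<le> K * normA k a * t^m" for m
    proof -
      have "norm (Pnjm n j m lam * alpha k xi a m) \<le> (K * R^m) * (normA k a / \<rho>^m)"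
        unfolding norm_mult P
        by (rule mult_mono) (use c K alpha_bound[OF k1 xiP0 xi1 a \<rho>0 c(4)] normA_nonneg[OF k1 xiP0 xi1] in auto)
      also have "\<dots> = K * normA k a * t^m" unfolding t_def by (simp add: power_divide)
      finally show ?thesis .
    qed
    have sg: "summable (\<lambda>m. K * normA k a * t^m)" using t by (intro summable_mult summable_geometric) simp
    show "summable (\<lambda>m. Pnjm n j m lam * alpha k xi a m)"
      by (rule summable_comparison_test'[OF sg bnd])
    have "norm (phi k xi n j lam a) \<le> (\<Sum>m. K * normA k a * t^m)"
      unfolding phi_def by (rule norm_suminf_le[OF bnd sg])
    also have "\<dots> = K * normA k a * (1 / (1 - t))" using t by (simp add: suminf_mult suminf_geometric)
    finally show "norm (phi k xi n j lam a) \<le> K / (1 - t) * normA k a" by simp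
  qed
qed

lemma phi_add:
  assumes lam: "\<forall>i\<in>{1..n}. lam i \<in> ball 0 (gam k xi)" and j: "j \<in> {1..n}"
    and a: "a \<in> Alg k" and b: "b \<in> Alg k"
  shows "phi k xi n j lam (\<lambda>x. a x + b x) = phi k xi n j lam a + phi k xi n j lam b"
proof -
  obtain C where C: "\<forall>a\<in>Alg k. summable (\<lambda>m. Pnjm n j m lam * alpha k xi a m)"
    using phi_facts[OF lam j] by blast
  show ?thesis unfolding phi_def alpha_add[OF k1 xiP0 xi1 a b] distrib_left
    by (rule suminf_add[symmetric]) (use C a b in auto)
qed

lemma phi_cmult:
  assumes lam: "\<forall>i\<in>{1..n}. lam i \<in> ball 0 (gam k xi)" and j: "j \<in> {1..n}"
    and a: "a \<in> Alg k"
  shows "phi k xi n j lam (\<lambda>x. c * a x) = c * phi k xi n j lam a"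
proof -
  obtain C where C: "\<forall>a\<in>Alg k. summable (\<lambda>m. Pnjm n j m lam * alpha k xi a m)"
    using phi_facts[OF lam j] by blast
  have "phi k xi n j lam (\<lambda>x. c * a x) = (\<Sum>m. c * (Pnjm n j m lam * alpha k xi a m))"
    unfolding phi_def alpha_cmult[OF k1 xiP0 xi1 a] by (simp add: algebra_simps)
  also have "\<dots> = c * phi k xi n j lam a" unfolding phi_def
    by (rule suminf_mult) (use C a in auto)
  finally show ?thesis .
qed

lemma phi_u1pow:
  assumes j: "j \<in> {1..n}" and r: "r \<in> {1..n}"
  shows "phi k xi n j lam (u1pow (r - 1)) = (if j = r then 1 else 0)"
proof -
  have "phi k xi n j lam (u1pow (r - 1)) = (\<Sum>m. if m = r - 1 then Pnjm n j m lam else 0)"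
    unfolding phi_def alpha_u1pow by (simp add: if_distrib cong: if_cong)
  also have "\<dots> = Pnjm n j (r - 1) lam" by (rule sums_unique[symmetric, OF sums_single])
  also have "\<dots> = coeff (RR n lam (r - 1)) (j - 1)" using Pnjm_eq[of j n "r - 1"] j by simp
  also have "\<dots> = (if j = r then 1 else 0)" using j r by (subst RR_small) (auto simp: coeff_monom)
  finally show ?thesis .
qed

end


lemma higher_deriv_poly: "(deriv ^^ l) (poly p) = poly ((pderiv ^^ l) p)" for p :: "complex poly"
proof (induction l)
  case 0 then show ?case by simp
next
  case (Suc l)
  have "deriv (poly q) = poly (pderiv q)" for q :: "complex poly"
    by (rule ext, rule DERIV_imp_deriv, rule poly_DERIV)
  then show ?case using Suc by simp
qed

lemma pderiv_funpow_0[simp]: "(pderiv ^^ l) 0 = 0"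
  by (induction l) auto

lemma order_pderiv_vanish:
  fixes p :: "complex poly"
  shows "d \<le> order w p \<Longrightarrow> l < d \<Longrightarrow> poly ((pderiv ^^ l) p) w = 0"
proof (induction l arbitrary: p d)
  case 0
  then show ?case using order_root[of p w] by auto
next
  case (Suc l)
  show ?case
  proof (cases "p = 0")
    case True then show ?thesis by simp
  next
    case False
    have "poly p w = 0" using Suc.prems order_root[of p w] by auto
    then have d: "order w p = Suc (order w (pderiv p))" using order_pderiv[OF False] by blast
    have "poly ((pderiv ^^ l) (pderiv p)) w = 0"
      by (rule Suc.IH[of "d - 1"]) (use Suc.prems d in auto)
    then show ?thesis by (simp add: funpow_Suc_right del: funpow.simps)
  qed
qed

lemma vanish_order:
  fixes p :: "complex poly"
  shows "(\<forall>l<d. poly ((pderiv ^^ l) p) w = 0) \<Longrightarrow> p = 0 \<or> d \<le> order w p"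
proof (induction d arbitrary: p)
  case 0 then show ?case by simp
next
  case (Suc d)
  have pw: "poly p w = 0" using Suc.prems by auto
  have "\<forall>l<d. poly ((pderiv ^^ l) (pderiv p)) w = 0"
  proof (intro allI impI)
    fix l assume "l < d"
    then have "poly ((pderiv ^^ Suc l) p) w = 0" using Suc.prems by auto
    then show "poly ((pderiv ^^ l) (pderiv p)) w = 0" by (simp add: funpow_Suc_right del: funpow.simps)
  qed
  then have IH: "pderiv p = 0 \<or> d \<le> order w (pderiv p)" by (rule Suc.IH)
  show ?case
  proof (cases "p = 0")
    case True then show ?thesis by simp
  next
    case False
    show ?thesis
    proof (cases "pderiv p = 0")
      case True
      then obtain h where "p = [:h:]" using pderiv_iszero by blast
      then show ?thesis using pw by simp
    next
      case False
      then show ?thesis using IH order_pderiv[OF \<open>p \<noteq> 0\<close> pw] by simp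
    qed
  qed
qed

lemma order_lin: "order w [:-l, 1:] = (if w = l then 1 else (0::nat))" for w l :: complex
proof (cases "w = l")
  case True then show ?thesis using order_power_n_n[of w 1] by simp
next
  case False then show ?thesis by (intro order_0I[THEN trans]) auto
qed

lemma q_lam_dvd:
  fixes p :: "complex poly"
  shows "(\<forall>w. order w (q_lam n lam) \<le> order w p) \<Longrightarrow> p \<noteq> 0 \<Longrightarrow> q_lam n lam dvd p"
proof (induction n arbitrary: p)
  case 0 then show ?case by simp
next
  case (Suc n)
  let ?l = "lam (Suc n)"
  have ordq: "order w (q_lam (Suc n) lam) = order w (q_lam n lam) + order w [:-?l, 1:]" for w
    unfolding q_lam_Suc by (rule order_mult) (metis q_lam_Suc q_lam_nz)
  have "1 \<le> order ?l p" using Suc.prems(1)[rule_format, of ?l] ordq[of ?l] by (simp add: order_lin)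
  then have "[:-?l,1:]^1 dvd p" using order_divides by blast
  then obtain p' where p': "p = [:-?l,1:] * p'" by auto
  have p'0: "p' \<noteq> 0" using p' Suc.prems(2) by auto
  have ordp: "order w p = order w [:-?l, 1:] + order w p'" for w
    unfolding p' by (rule order_mult) (use p' Suc.prems(2) in simp)
  have "\<forall>w. order w (q_lam n lam) \<le> order w p'"
  proof
    fix w show "order w (q_lam n lam) \<le> order w p'"
      using Suc.prems(1) ordq[of w] ordp[of w] by (metis add.commute add_le_cancel_left)
  qed
  then have "q_lam n lam dvd p'" using Suc.IH p'0 by blast
  then have "q_lam n lam * [:-?l,1:] dvd p' * [:-?l,1:]" by (rule mult_dvd_mono) simp
  then show ?case unfolding q_lam_Suc p' by (simp only: mult.commute)
qed


context
  fixes k :: nat and xi :: "nat \<Rightarrow> complex poly"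
  assumes k1: "1 \<le> k" and xiP0: "\<forall>j\<in>{1..k}. xi j \<in> P0" and xi1: "xi 1 = [:0,1:]"
begin

lemma Rp_sums:
  assumes lam: "\<forall>i\<in>{1..n}. lam i \<in> ball 0 (gam k xi)" and a: "a \<in> Alg k"
  shows "(\<lambda>m. alpha k xi a m * poly (RR n lam m) z) sums poly (\<Sum>i<n. monom (phi k xi n (Suc i) lam a) i) z"
proof -
  have s: "(\<lambda>m. Pnjm n (Suc i) m lam * alpha k xi a m) sums phi k xi n (Suc i) lam a" if "i < n" for i
  proof -
    have "summable (\<lambda>m. Pnjm n (Suc i) m lam * alpha k xi a m)"
      using phi_facts[OF k1 xiP0 xi1 lam, of "Suc i"] that a by auto
    then show ?thesis unfolding phi_def by (rule summable_sums)
  qed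
  have "(\<lambda>m. \<Sum>i<n. Pnjm n (Suc i) m lam * alpha k xi a m * z^i) sums (\<Sum>i<n. phi k xi n (Suc i) lam a * z^i)"
    by (rule sums_sum, rule sums_mult2, rule s) simp
  moreover have "(\<Sum>i<n. Pnjm n (Suc i) m lam * alpha k xi a m * z^i) = alpha k xi a m * poly (RR n lam m) z" for m
  proof -
    have "(\<Sum>i<n. Pnjm n (Suc i) m lam * alpha k xi a m * z^i) = (\<Sum>i<n. alpha k xi a m * (coeff (RR n lam m) i * z^i))"
      by (rule sum.cong[OF refl]) (auto simp: Pnjm_eq)
    also have "\<dots> = alpha k xi a m * poly (RR n lam m) z"
      by (simp add: sum_distrib_left[symmetric] poly_sum_lt[of n] RR_coeff_high)
    finally show ?thesis .
  qed
  moreover have "(\<Sum>i<n. phi k xi n (Suc i) lam a * z^i) = poly (\<Sum>i<n. monom (phi k xi n (Suc i) lam a) i) z"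
    by (simp add: poly_sum poly_monom)
  ultimately show ?thesis by simp
qed

lemma key:
  assumes lam: "\<forall>i\<in>{1..n}. lam i \<in> ball 0 (gam k xi)" and a: "a \<in> Alg k"
    and w: "poly (q_lam n lam) w = 0" and l: "l < order w (q_lam n lam)"
  shows "(deriv ^^ l) (Phi k xi a) w = poly ((pderiv ^^ l) (\<Sum>i<n. monom (phi k xi n (Suc i) lam a) i)) w"
proof -
  define Rp where "Rp = (\<Sum>i<n. monom (phi k xi n (Suc i) lam a) i)"
  obtain r R \<rho> where c: "0 \<le> r" "r < R" "R < \<rho>" "\<rho> < gam k xi" "\<forall>i\<in>{1..n}. norm (lam i) \<le> r"
    using lam_consts[OF k1 xiP0 xi1 lam] by blast
  obtain K where K: "K \<ge> 0" "\<forall>m i. norm (coeff (RR n lam m) i) \<le> K * R^m"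
    using RR_bound[OF c(1) c(2), of n] c(5) by blast
  obtain i0 where i0: "i0 \<in> {1..n}" "w = lam i0" using w q_lam_root by blast
  have wr: "norm w \<le> r" using i0 c(5) by simp
  define A where "A = normA k a"
  have A0: "0 \<le> A" unfolding A_def by (rule normA_nonneg[OF k1 xiP0 xi1])
  define C where "C = 1 + real n * K * (1+R)^n"
  have C0: "0 \<le> C" unfolding C_def using K c by simp
  define t where "t = R / \<rho>"
  have t: "0 \<le> t" "t < 1" using c unfolding t_def by auto
  have \<rho>0: "0 < \<rho>" using c by simp
  define E where "E = (\<lambda>m. [:0,1:]^m - RR n lam m)"
  have Ebound: "norm (poly (E m) z) \<le> C * R^m" if z: "norm z \<le> R" for m z
  proof -
    have "norm (poly (RR n lam m) z) = norm (\<Sum>i<n. coeff (RR n lam m) i * z^i)"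
      by (simp add: poly_sum_lt[of n] RR_coeff_high)
    also have "\<dots> \<le> (\<Sum>i<n. K * R^m * (1+R)^n)"
    proof (rule sum_norm_le)
      fix i assume i: "i \<in> {..<n}"
      have "norm (z^i) \<le> (1+R)^i" unfolding norm_power using z by (intro power_mono) auto
      also have "\<dots> \<le> (1+R)^n" using i c by (intro power_increasing) auto
      finally have zi: "norm (z^i) \<le> (1+R)^n" .
      show "norm (coeff (RR n lam m) i * z^i) \<le> K * R^m * (1+R)^n"
        unfolding norm_mult by (rule mult_mono) (use K zi c in auto)
    qed
    also have "\<dots> = real n * K * (1+R)^n * R^m" by simp
    finally have r1: "norm (poly (RR n lam m) z) \<le> real n * K * (1+R)^n * R^m" .
    have r2: "norm (z^m) \<le> R^m" unfolding norm_power using z by (intro power_mono) auto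
    have "norm (poly (E m) z) \<le> norm (z^m) + norm (poly (RR n lam m) z)"
      unfolding E_def by (simp add: norm_triangle_ineq4)
    also have "\<dots> \<le> C * R^m" using r1 r2 unfolding C_def by (simp add: algebra_simps)
    finally show ?thesis .
  qed
  have Hsums: "(\<lambda>m. alpha k xi a m * poly (E m) z) sums (Phi k xi a z - poly Rp z)" if z: "norm z < gam k xi" for z
  proof -
    have "(\<lambda>m. alpha k xi a m * z^m - alpha k xi a m * poly (RR n lam m) z) sums (Phi k xi a z - poly Rp z)"
      unfolding Rp_def by (rule sums_diff[OF alpha_sums[OF k1 xiP0 xi1 a z] Rp_sums[OF lam a]])
    then show ?thesis unfolding E_def by (simp add: right_diff_distrib)
  qed
  have hol: "Phi k xi a holomorphic_on ball 0 (gam k xi)" by (rule Phi_holo[OF k1 xiP0 xi1 a])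
  define PM where "PM = (\<lambda>M. \<Sum>m<M. Polynomial.smult (alpha k xi a m) (E m))"
  define T where "T = (\<lambda>M z. Phi k xi a z - poly Rp z - poly (PM M) z)"
  have Tsums: "(\<lambda>m. alpha k xi a (m+M) * poly (E (m+M)) z) sums T M z" if z: "norm z < gam k xi" for z M
  proof -
    have "poly (PM M) z = (\<Sum>m<M. alpha k xi a m * poly (E m) z)" unfolding PM_def by (simp add: poly_sum)
    then show ?thesis using sums_split_initial_segment[OF Hsums[OF z], of M] unfolding T_def by simp
  qed
  have Tbound: "norm (T M z) \<le> A * C * t^M / (1 - t)" if z: "norm z \<le> R" for M z
  proof -
    have zg: "norm z < gam k xi" using z c by simp
    have bnd: "norm (alpha k xi a (m+M) * poly (E (m+M)) z) \<le> A * C * t^M * t^m" for m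
    proof -
      have "norm (alpha k xi a (m+M) * poly (E (m+M)) z) \<le> (A / \<rho>^(m+M)) * (C * R^(m+M))"
        unfolding norm_mult A_def
        by (rule mult_mono) (use alpha_bound[OF k1 xiP0 xi1 a \<rho>0 c(4)] Ebound[OF z] A0 A_def \<rho>0 in auto)
      also have "\<dots> = A * C * t^M * t^m" unfolding t_def by (simp add: power_divide power_add field_simps)
      finally show ?thesis .
    qed
    have sg: "summable (\<lambda>m. A * C * t^M * t^m)" using t by (intro summable_mult summable_geometric) simp
    have "T M z = (\<Sum>m. alpha k xi a (m+M) * poly (E (m+M)) z)" using Tsums[OF zg] by (simp add: sums_iff)
    also have "norm \<dots> \<le> (\<Sum>m. A * C * t^M * t^m)" by (rule norm_suminf_le[OF bnd sg])
    also have "\<dots> = A * C * t^M / (1 - t)" using t by (simp add: suminf_mult suminf_geometric)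
    finally show ?thesis .
  qed
  have Thol: "T M holomorphic_on ball 0 (gam k xi)" for M
    unfolding T_def by (intro holomorphic_intros hol)
  have rR: "0 < R - r" using c by simp
  have Dbound: "norm ((deriv ^^ l) (T M) w) \<le> fact l * (A * C * t^M / (1 - t)) / (R - r)^l" for M
  proof (rule Cauchy_inequality)
    have sub: "cball w (R - r) \<subseteq> ball 0 (gam k xi)"
    proof
      fix x assume "x \<in> cball w (R - r)"
      then have "norm x \<le> norm w + (R - r)" using norm_triangle_ineq2[of x w] by (simp add: dist_norm norm_minus_commute)
      then show "x \<in> ball 0 (gam k xi)" using wr c by simp
    qed
    show "T M holomorphic_on ball w (R - r)" using Thol sub ball_subset_cball holomorphic_on_subset by blast
    show "continuous_on (cball w (R - r)) (T M)"
      using holomorphic_on_imp_continuous_on[OF Thol] sub continuous_on_subset by blast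
    show "0 < R - r" by fact
    fix x assume "norm (w - x) = R - r"
    then have "norm x \<le> R" using norm_triangle_ineq2[of x w] wr by (simp add: norm_minus_commute)
    then show "norm (T M x) \<le> A * C * t^M / (1 - t)" by (rule Tbound)
  qed
  have wS: "w \<in> ball 0 (gam k xi)" using wr c by simp
  have PM0: "(deriv ^^ l) (poly (PM M)) w = 0" for M
  proof (cases "PM M = 0")
    case True then show ?thesis by (simp add: higher_deriv_poly)
  next
    case False
    have "q_lam n lam dvd PM M" unfolding PM_def E_def
      by (intro dvd_sum dvd_smult RR_dvd)
    then have "order w (q_lam n lam) \<le> order w (PM M)" using False by (rule dvd_imp_order_le[rotated])
    then show ?thesis unfolding higher_deriv_poly using l by (rule order_pderiv_vanish)
  qed
  have decomp: "(deriv ^^ l) (Phi k xi a) w - poly ((pderiv ^^ l) Rp) w = (deriv ^^ l) (T M) w" for M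
  proof -
    have "Phi k xi a = (\<lambda>z. (T M z + poly (PM M) z) + poly Rp z)" unfolding T_def by auto
    then have "(deriv ^^ l) (Phi k xi a) w = (deriv ^^ l) (\<lambda>z. (T M z + poly (PM M) z) + poly Rp z) w" by simp
    also have "\<dots> = (deriv ^^ l) (\<lambda>z. T M z + poly (PM M) z) w + (deriv ^^ l) (poly Rp) w"
      by (rule higher_deriv_add[OF _ _ _ wS]) (auto intro!: holomorphic_intros Thol)
    also have "(deriv ^^ l) (\<lambda>z. T M z + poly (PM M) z) w = (deriv ^^ l) (T M) w + (deriv ^^ l) (poly (PM M)) w"
      by (rule higher_deriv_add[OF Thol _ _ wS]) (auto intro!: holomorphic_intros)
    finally show ?thesis using PM0[of M] by (simp add: higher_deriv_poly)
  qed
  define D where "D = (deriv ^^ l) (Phi k xi a) w - poly ((pderiv ^^ l) Rp) w"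
  define cc where "cc = fact l * (A * C / (1 - t)) / (R - r)^l"
  have Db: "norm D \<le> cc * t^M" for M
    using Dbound[of M] decomp[of M] unfolding D_def cc_def by (simp add: field_simps)
  have "(\<lambda>M. cc * t^M) \<longlonglongrightarrow> 0"
    using t by (intro tendsto_mult_right_zero LIMSEQ_power_zero) simp
  then have "norm D \<le> 0"
    by (rule tendsto_le[OF trivial_limit_sequentially _ tendsto_const]) (use Db in simp)
  then show ?thesis unfolding D_def Rp_def by simp
qed

end


context
  fixes k :: nat and xi :: "nat \<Rightarrow> complex poly"
  assumes k1: "1 \<le> k" and xiP0: "\<forall>j\<in>{1..k}. xi j \<in> P0" and xi1: "xi 1 = [:0,1:]"
begin

lemma ideal_eq:
  assumes lam: "\<forall>i\<in>{1..n}. lam i \<in> ball 0 (gam k xi)"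
  shows "Iideal k xi (q_lam n lam) = {a \<in> Alg k. \<forall>j\<in>{1..n}. phi k xi n j lam a = 0}"
proof (intro equalityI subsetI)
  fix a assume a: "a \<in> Iideal k xi (q_lam n lam)"
  then have aA: "a \<in> Alg k" and van: "\<forall>w. poly (q_lam n lam) w = 0 \<longrightarrow> (\<forall>l < order w (q_lam n lam). (deriv ^^ l) (Phi k xi a) w = 0)"
    unfolding Iideal_def by auto
  define Rp where "Rp = (\<Sum>i<n. monom (phi k xi n (Suc i) lam a) i)"
  have cRp: "coeff Rp i = (if i < n then phi k xi n (Suc i) lam a else 0)" for i
    unfolding Rp_def by (simp add: coeff_sum coeff_monom)
  have "Rp = 0"
  proof (rule ccontr)
    assume Rp0: "Rp \<noteq> 0"
    have "\<forall>w. order w (q_lam n lam) \<le> order w Rp"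
    proof
      fix w show "order w (q_lam n lam) \<le> order w Rp"
      proof (cases "poly (q_lam n lam) w = 0")
        case False then show ?thesis using order_0I[OF False] by simp
      next
        case True
        have "\<forall>l<order w (q_lam n lam). poly ((pderiv ^^ l) Rp) w = 0"
        proof (intro allI impI)
          fix l assume l: "l < order w (q_lam n lam)"
          have "(deriv ^^ l) (Phi k xi a) w = 0" using van True l by blast
          moreover have "(deriv ^^ l) (Phi k xi a) w = poly ((pderiv ^^ l) Rp) w"
            unfolding Rp_def by (rule key[OF k1 xiP0 xi1 lam aA True l])
          ultimately show "poly ((pderiv ^^ l) Rp) w = 0" by simp
        qed
        then have "Rp = 0 \<or> order w (q_lam n lam) \<le> order w Rp" by (rule vanish_order)
        then show ?thesis using Rp0 by simp
      qed
    qed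
    then have "q_lam n lam dvd Rp" using Rp0 by (rule q_lam_dvd)
    then have "n \<le> degree Rp" using dvd_imp_degree_le[OF _ Rp0] by fastforce
    moreover have "degree Rp < n" by (rule deg_lt_of_coeff) (use cRp Rp0 in auto)
    ultimately show False by simp
  qed
  have "\<forall>j\<in>{1..n}. phi k xi n j lam a = 0"
  proof
    fix j assume j: "j \<in> {1..n}"
    then have j1: "j - 1 < n" and j2: "Suc (j - 1) = j" by auto
    have "coeff Rp (j - 1) = phi k xi n j lam a" using cRp[of "j - 1"] j1 j2 by simp
    then show "phi k xi n j lam a = 0" using \<open>Rp = 0\<close> by simp
  qed
  then show "a \<in> {a \<in> Alg k. \<forall>j\<in>{1..n}. phi k xi n j lam a = 0}" using aA by simp
next
  fix a assume a: "a \<in> {a \<in> Alg k. \<forall>j\<in>{1..n}. phi k xi n j lam a = 0}"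
  then have aA: "a \<in> Alg k" and z: "\<forall>j\<in>{1..n}. phi k xi n j lam a = 0" by auto
  have Rp: "(\<Sum>i<n. monom (phi k xi n (Suc i) lam a) i) = 0"
    by (rule sum.neutral) (use z in auto)
  have "\<forall>w. poly (q_lam n lam) w = 0 \<longrightarrow> (\<forall>l < order w (q_lam n lam). (deriv ^^ l) (Phi k xi a) w = 0)"
  proof (intro allI impI)
    fix w l assume w: "poly (q_lam n lam) w = 0" and l: "l < order w (q_lam n lam)"
    show "(deriv ^^ l) (Phi k xi a) w = 0"
      using key[OF k1 xiP0 xi1 lam aA w l] unfolding Rp by simp
  qed
  then show "a \<in> Iideal k xi (q_lam n lam)"
    unfolding Iideal_def using aA by blast
qed

lemma zero_Alg: "(\<lambda>_. 0) \<in> Alg k"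
  unfolding Alg_def by simp

lemma phi_lam_cont:
  assumes j: "j \<in> {1..n}" and lam0: "\<forall>i\<in>{1..n}. lam0 i \<in> ball 0 (gam k xi)" and e: "\<epsilon> > 0"
  shows "\<exists>\<delta>>0. \<forall>lam. (\<forall>i\<in>{1..n}. lam i \<in> ball 0 (gam k xi)) \<and> (\<forall>i\<in>{1..n}. dist (lam i) (lam0 i) < \<delta>) \<longrightarrow>
            dnorm k (\<lambda>a. phi k xi n j lam a - phi k xi n j lam0 a) < \<epsilon>"
proof -
  obtain r0 R \<rho> where c: "0 \<le> r0" "r0 < R" "R < \<rho>" "\<rho> < gam k xi" "\<forall>i\<in>{1..n}. norm (lam0 i) \<le> r0"
    using lam_consts[OF k1 xiP0 xi1 lam0] by blast
  define r where "r = (r0 + R) / 2"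
  have r: "r0 < r" "r < R" "0 \<le> r" using c unfolding r_def by auto
  obtain K where K: "K \<ge> 0" "\<forall>lam. (\<forall>i\<in>{1..n}. norm (lam i) \<le> r) \<longrightarrow> (\<forall>m i. norm (coeff (RR n lam m) i) \<le> K * R^m)"
    using RR_bound[OF r(3) r(2), of n] by blast
  have \<rho>0: "0 < \<rho>" using c by simp
  define t where "t = R / \<rho>"
  have t: "0 \<le> t" "t < 1" using c unfolding t_def by auto
  define P where "P = (\<lambda>m lam. coeff (RR n lam m) (j - 1))"
  have Pn: "Pnjm n j m lam = P m lam" for m lam using Pnjm_eq[of j n m] j unfolding P_def by simp
  define aa where "aa = (\<lambda>m lam. norm (P m lam - P m lam0) / \<rho>^m)"
  have l0r: "\<forall>i\<in>{1..n}. norm (lam0 i) \<le> r" using c(5) r by force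
  have aab: "aa m lam \<le> 2 * K * t^m" if "\<forall>i\<in>{1..n}. norm (lam i) \<le> r" for m lam
  proof -
    have "norm (P m lam - P m lam0) \<le> norm (P m lam) + norm (P m lam0)" by (rule norm_triangle_ineq4)
    also have "\<dots> \<le> K * R^m + K * R^m" unfolding P_def using K(2) that l0r by (intro add_mono) blast+
    finally have "norm (P m lam - P m lam0) / \<rho>^m \<le> (2 * K * R^m) / \<rho>^m"
      using \<rho>0 by (intro divide_right_mono) auto
    also have "\<dots> = 2 * K * t^m" unfolding t_def by (simp add: power_divide)
    finally show ?thesis unfolding aa_def .
  qed
  have aa0: "0 \<le> aa m lam" for m lam unfolding aa_def using \<rho>0 by simp
  have sg: "summable (\<lambda>m. 2 * K * t^m)" using t by (intro summable_mult summable_geometric) simp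
  define dd where "dd = (\<lambda>lam. \<Sum>i\<in>{1..n}. dist (lam i) (lam0 i))"
  define F where "F = filtercomap dd (nhds 0)"
  have Fnb: "F \<noteq> bot" unfolding F_def
  proof (rule filtercomap_neq_bot)
    fix P' assume "eventually P' (nhds (0::real))"
    then have "P' 0" by (rule eventually_nhds_x_imp_x)
    moreover have "dd lam0 = 0" unfolding dd_def by simp
    ultimately show "\<exists>x. P' (dd x)" by metis
  qed
  have ddlim: "(dd \<longlongrightarrow> 0) F" unfolding F_def by (rule filterlim_filtercomap)
  have proj: "\<forall>i\<in>{1..n}. ((\<lambda>l. l i) \<longlongrightarrow> lam0 i) F"
  proof
    fix i assume i: "i \<in> {1..n}"
    show "((\<lambda>l. l i) \<longlongrightarrow> lam0 i) F"
    proof (rule tendstoI)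
      fix e' :: real assume e': "e' > 0"
      have "eventually (\<lambda>l. dist (dd l) 0 < e') F" using tendstoD[OF ddlim e'] .
      then show "eventually (\<lambda>l. dist (l i) (lam0 i) < e') F"
      proof (rule eventually_mono)
        fix l assume "dist (dd l) 0 < e'"
        moreover have "dist (l i) (lam0 i) \<le> dd l" unfolding dd_def
          by (rule member_le_sum) (use i in auto)
        moreover have "0 \<le> dd l" unfolding dd_def by (rule sum_nonneg) simp
        ultimately show "dist (l i) (lam0 i) < e'" by simp
      qed
    qed
  qed
  have evr: "eventually (\<lambda>l. \<forall>i\<in>{1..n}. norm (l i) \<le> r) F"
  proof (rule eventually_ball_finite, simp, rule ballI)
    fix i assume i: "i \<in> {1..n}"
    have "eventually (\<lambda>l. dist (l i) (lam0 i) < r - r0) F" using tendstoD[OF proj[rule_format, OF i]] r by simp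
    then show "eventually (\<lambda>l. norm (l i) \<le> r) F"
    proof (rule eventually_mono)
      fix l assume "dist (l i) (lam0 i) < r - r0"
      moreover have "norm (l i) \<le> norm (lam0 i) + dist (l i) (lam0 i)"
        using norm_triangle_ineq2[of "l i" "lam0 i"] by (simp add: dist_norm)
      ultimately show "norm (l i) \<le> r" using c(5) i by fastforce
    qed
  qed
  have lim: "((\<lambda>l. suminf (\<lambda>m. aa m l)) \<longlongrightarrow> suminf (\<lambda>m. 0::real)) F"
  proof (rule tannerys_theorem[THEN conjunct2, THEN conjunct2])
    fix m
    have "((\<lambda>l. P m l) \<longlongrightarrow> P m lam0) F" unfolding P_def by (rule RR_coeff_tendsto[OF proj])
    then have "((\<lambda>l. norm (P m l - P m lam0)) \<longlongrightarrow> 0) F"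
      by (intro tendsto_norm_zero) (simp add: LIM_zero)
    then show "((\<lambda>l. aa m l) \<longlongrightarrow> 0) F" unfolding aa_def
      using tendsto_divide_zero by blast
  next
    show "eventually (\<lambda>(m, l). norm (aa m l) \<le> 2 * K * t^m) (at_top \<times>\<^sub>F F)"
      using eventually_prodI[OF always_eventually evr, of "\<lambda>_. True"]
      by (rule eventually_mono) (use aab aa0 in auto)
  qed (use sg Fnb in auto)
  then have "eventually (\<lambda>l. suminf (\<lambda>m. aa m l) < \<epsilon> / 2) F"
    using e by (intro order_tendstoD) auto
  then have "eventually (\<lambda>l. suminf (\<lambda>m. aa m l) < \<epsilon> / 2 \<and> (\<forall>i\<in>{1..n}. norm (l i) \<le> r)) F"
    using evr by eventually_elim auto
  then obtain S where S: "open S" "0 \<in> S" "\<forall>l. dd l \<in> S \<longrightarrow> suminf (\<lambda>m. aa m l) < \<epsilon> / 2 \<and> (\<forall>i\<in>{1..n}. norm (l i) \<le> r)"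
    unfolding F_def eventually_filtercomap_nhds by blast
  obtain e0 where e0: "e0 > 0" "ball 0 e0 \<subseteq> S" using S(1,2) open_contains_ball by blast
  have n1: "1 \<le> n" using j by simp
  define \<delta> where "\<delta> = e0 / real n"
  show ?thesis
  proof (intro exI[of _ \<delta>] conjI allI impI)
    show "0 < \<delta>" unfolding \<delta>_def using e0 n1 by simp
    fix lam assume lam: "(\<forall>i\<in>{1..n}. lam i \<in> ball 0 (gam k xi)) \<and> (\<forall>i\<in>{1..n}. dist (lam i) (lam0 i) < \<delta>)"
    have "dd lam < (\<Sum>i\<in>{1..n}. \<delta>)" unfolding dd_def
      by (rule sum_strict_mono) (use lam n1 in auto)
    also have "\<dots> = e0" unfolding \<delta>_def using n1 by simp
    finally have "dd lam \<in> ball 0 e0" using sum_nonneg[of "{1..n}" "\<lambda>i. dist (lam i) (lam0 i)"] unfolding dd_def by simp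
    then have good: "suminf (\<lambda>m. aa m lam) < \<epsilon> / 2" "\<forall>i\<in>{1..n}. norm (lam i) \<le> r" using S(3) e0(2) by blast+
    have saa: "summable (\<lambda>m. aa m lam)"
      by (rule summable_comparison_test'[OF sg]) (use aab[OF good(2)] aa0 in auto)
    obtain C1 where C1: "\<forall>a\<in>Alg k. summable (\<lambda>m. Pnjm n j m lam * alpha k xi a m)"
      using phi_facts[OF k1 xiP0 xi1 _ j, of lam] lam by blast
    obtain C0 where C0: "\<forall>a\<in>Alg k. summable (\<lambda>m. Pnjm n j m lam0 * alpha k xi a m)"
      using phi_facts[OF k1 xiP0 xi1 lam0 j] by blast
    have bnd: "norm (phi k xi n j lam a - phi k xi n j lam0 a) \<le> suminf (\<lambda>m. aa m lam)"
      if a: "a \<in> Alg k" "normA k a \<le> 1" for a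
    proof -
      have "phi k xi n j lam a - phi k xi n j lam0 a = (\<Sum>m. Pnjm n j m lam * alpha k xi a m - Pnjm n j m lam0 * alpha k xi a m)"
      proof -
        have s1: "summable (\<lambda>m. Pnjm n j m lam * alpha k xi a m)" using C1 a(1) by blast
        have s0: "summable (\<lambda>m. Pnjm n j m lam0 * alpha k xi a m)" using C0 a(1) by blast
        show ?thesis unfolding phi_def by (rule suminf_diff[OF s1 s0])
      qed
      also have "norm \<dots> \<le> suminf (\<lambda>m. aa m lam)"
      proof (rule norm_suminf_le[OF _ saa])
        fix m
        have "norm (Pnjm n j m lam * alpha k xi a m - Pnjm n j m lam0 * alpha k xi a m)
            = norm (P m lam - P m lam0) * norm (alpha k xi a m)" unfolding Pn by (simp add: left_diff_distrib[symmetric] norm_mult)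
        also have "\<dots> \<le> norm (P m lam - P m lam0) * (1 / \<rho>^m)"
        proof (rule mult_left_mono)
          have "norm (alpha k xi a m) \<le> normA k a / \<rho>^m" by (rule alpha_bound[OF k1 xiP0 xi1 a(1) \<rho>0 c(4)])
          also have "\<dots> \<le> 1 / \<rho>^m" using a(2) \<rho>0 by (intro divide_right_mono) auto
          finally show "norm (alpha k xi a m) \<le> 1 / \<rho>^m" .
        qed simp
        also have "\<dots> = aa m lam" unfolding aa_def by simp
        finally show "norm (Pnjm n j m lam * alpha k xi a m - Pnjm n j m lam0 * alpha k xi a m) \<le> aa m lam" .
      qed
      finally show ?thesis .
    qed
    have "dnorm k (\<lambda>a. phi k xi n j lam a - phi k xi n j lam0 a) \<le> suminf (\<lambda>m. aa m lam)"
      unfolding dnorm_def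
    proof (rule cSup_least)
      show "{norm (phi k xi n j lam a - phi k xi n j lam0 a) |a. a \<in> Alg k \<and> normA k a \<le> 1} \<noteq> {}"
        using zero_Alg by (auto simp: normA_def intro!: exI[of _ "\<lambda>_. 0"])
    qed (use bnd in auto)
    moreover have "0 \<le> suminf (\<lambda>m. aa m lam)" by (rule suminf_nonneg[OF saa aa0])
    ultimately show "dnorm k (\<lambda>a. phi k xi n j lam a - phi k xi n j lam0 a) < \<epsilon>" using good(1) by linarith
  qed
qed

end


theorem lemma4p4:
  fixes k n :: nat and xi :: "nat \<Rightarrow> complex poly"
  assumes "k \<ge> 1" and "\<forall>j\<in>{1..k}. xi j \<in> P0" and "xi 1 = [:0, 1:]"
  shows "(\<forall>lam. (\<forall>i\<in>{1..n}. lam i \<in> ball 0 (gam k xi)) \<longrightarrow>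
            (\<forall>j\<in>{1..n}.
               (\<forall>a\<in>Alg k. summable (\<lambda>m. Pnjm n j m lam * alpha k xi a m))
             \<and> (\<forall>a\<in>Alg k. \<forall>b\<in>Alg k.
                  phi k xi n j lam (\<lambda>x. a x + b x) = phi k xi n j lam a + phi k xi n j lam b)
             \<and> (\<forall>c. \<forall>a\<in>Alg k. phi k xi n j lam (\<lambda>x. c * a x) = c * phi k xi n j lam a)
             \<and> (\<forall>a\<in>Alg k. \<forall>\<epsilon>>0. \<exists>\<delta>>0. \<forall>b\<in>Alg k.
                  normA k (\<lambda>x. b x - a x) < \<delta> \<longrightarrow>
                  norm (phi k xi n j lam b - phi k xi n j lam a) < \<epsilon>)
             \<and> (\<forall>r\<in>{1..n}. phi k xi n j lam (u1pow (r - 1)) = (if j = r then 1 else 0)))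
          \<and> Iideal k xi (q_lam n lam) = {a \<in> Alg k. \<forall>j\<in>{1..n}. phi k xi n j lam a = 0})
       \<and> (\<forall>j\<in>{1..n}. \<forall>lam0. (\<forall>i\<in>{1..n}. lam0 i \<in> ball 0 (gam k xi)) \<longrightarrow>
            (\<forall>\<epsilon>>0. \<exists>\<delta>>0. \<forall>lam. (\<forall>i\<in>{1..n}. lam i \<in> ball 0 (gam k xi)) \<and>
                 (\<forall>i\<in>{1..n}. dist (lam i) (lam0 i) < \<delta>) \<longrightarrow>
                 dnorm k (\<lambda>a. phi k xi n j lam a - phi k xi n j lam0 a) < \<epsilon>))"
proof -
  note ctx = assms(1) assms(2) assms(3)
  have P1: "\<forall>lam. (\<forall>i\<in>{1..n}. lam i \<in> ball 0 (gam k xi)) \<longrightarrow>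
            (\<forall>j\<in>{1..n}.
               (\<forall>a\<in>Alg k. summable (\<lambda>m. Pnjm n j m lam * alpha k xi a m))
             \<and> (\<forall>a\<in>Alg k. \<forall>b\<in>Alg k.
                  phi k xi n j lam (\<lambda>x. a x + b x) = phi k xi n j lam a + phi k xi n j lam b)
             \<and> (\<forall>c. \<forall>a\<in>Alg k. phi k xi n j lam (\<lambda>x. c * a x) = c * phi k xi n j lam a)
             \<and> (\<forall>a\<in>Alg k. \<forall>\<epsilon>>0. \<exists>\<delta>>0. \<forall>b\<in>Alg k.
                  normA k (\<lambda>x. b x - a x) < \<delta> \<longrightarrow>
                  norm (phi k xi n j lam b - phi k xi n j lam a) < \<epsilon>)
             \<and> (\<forall>r\<in>{1..n}. phi k xi n j lam (u1pow (r - 1)) = (if j = r then 1 else 0)))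
          \<and> Iideal k xi (q_lam n lam) = {a \<in> Alg k. \<forall>j\<in>{1..n}. phi k xi n j lam a = 0}"
  proof (intro allI impI conjI)
    fix lam :: "nat \<Rightarrow> complex" assume lam: "\<forall>i\<in>{1..n}. lam i \<in> ball 0 (gam k xi)"
    show "Iideal k xi (q_lam n lam) = {a \<in> Alg k. \<forall>j\<in>{1..n}. phi k xi n j lam a = 0}"
      by (rule ideal_eq[OF ctx lam])
    show "\<forall>j\<in>{1..n}.
               (\<forall>a\<in>Alg k. summable (\<lambda>m. Pnjm n j m lam * alpha k xi a m))
             \<and> (\<forall>a\<in>Alg k. \<forall>b\<in>Alg k.
                  phi k xi n j lam (\<lambda>x. a x + b x) = phi k xi n j lam a + phi k xi n j lam b)
             \<and> (\<forall>c. \<forall>a\<in>Alg k. phi k xi n j lam (\<lambda>x. c * a x) = c * phi k xi n j lam a)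
             \<and> (\<forall>a\<in>Alg k. \<forall>\<epsilon>>0. \<exists>\<delta>>0. \<forall>b\<in>Alg k.
                  normA k (\<lambda>x. b x - a x) < \<delta> \<longrightarrow>
                  norm (phi k xi n j lam b - phi k xi n j lam a) < \<epsilon>)
             \<and> (\<forall>r\<in>{1..n}. phi k xi n j lam (u1pow (r - 1)) = (if j = r then 1 else 0))"
    proof
      fix j assume j: "j \<in> {1..n}"
      obtain C where C: "C \<ge> 0" "\<forall>a\<in>Alg k. summable (\<lambda>m. Pnjm n j m lam * alpha k xi a m) \<and>
            norm (phi k xi n j lam a) \<le> C * normA k a"
        using phi_facts[OF ctx lam j] by blast
      show "(\<forall>a\<in>Alg k. summable (\<lambda>m. Pnjm n j m lam * alpha k xi a m))
             \<and> (\<forall>a\<in>Alg k. \<forall>b\<in>Alg k.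
                  phi k xi n j lam (\<lambda>x. a x + b x) = phi k xi n j lam a + phi k xi n j lam b)
             \<and> (\<forall>c. \<forall>a\<in>Alg k. phi k xi n j lam (\<lambda>x. c * a x) = c * phi k xi n j lam a)
             \<and> (\<forall>a\<in>Alg k. \<forall>\<epsilon>>0. \<exists>\<delta>>0. \<forall>b\<in>Alg k.
                  normA k (\<lambda>x. b x - a x) < \<delta> \<longrightarrow>
                  norm (phi k xi n j lam b - phi k xi n j lam a) < \<epsilon>)
             \<and> (\<forall>r\<in>{1..n}. phi k xi n j lam (u1pow (r - 1)) = (if j = r then 1 else 0))"
      proof (intro conjI)
        show "\<forall>a\<in>Alg k. summable (\<lambda>m. Pnjm n j m lam * alpha k xi a m)" using C by blast
        show "\<forall>a\<in>Alg k. \<forall>b\<in>Alg k. phi k xi n j lam (\<lambda>x. a x + b x) = phi k xi n j lam a + phi k xi n j lam b"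
          using phi_add[OF ctx lam j] by blast
        show "\<forall>c. \<forall>a\<in>Alg k. phi k xi n j lam (\<lambda>x. c * a x) = c * phi k xi n j lam a"
          using phi_cmult[OF ctx lam j] by blast
        show "\<forall>r\<in>{1..n}. phi k xi n j lam (u1pow (r - 1)) = (if j = r then 1 else 0)"
          using phi_u1pow[OF ctx j] by blast
        show "\<forall>a\<in>Alg k. \<forall>\<epsilon>>0. \<exists>\<delta>>0. \<forall>b\<in>Alg k. normA k (\<lambda>x. b x - a x) < \<delta> \<longrightarrow>
                  norm (phi k xi n j lam b - phi k xi n j lam a) < \<epsilon>"
        proof (intro ballI allI impI)
          fix a :: "(nat \<Rightarrow> nat) \<Rightarrow> complex" and \<epsilon> :: real assume a: "a \<in> Alg k" and e: "\<epsilon> > 0"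
          show "\<exists>\<delta>>0. \<forall>b\<in>Alg k. normA k (\<lambda>x. b x - a x) < \<delta> \<longrightarrow> norm (phi k xi n j lam b - phi k xi n j lam a) < \<epsilon>"
          proof (intro exI[of _ "\<epsilon> / (C + 1)"] conjI ballI impI)
            show "0 < \<epsilon> / (C + 1)" using e C by simp
            fix b assume b: "b \<in> Alg k" and d: "normA k (\<lambda>x. b x - a x) < \<epsilon> / (C + 1)"
            have ma: "(\<lambda>x. (-1) * a x) \<in> Alg k" by (rule Alg_cmult[OF ctx a])
            have "phi k xi n j lam (\<lambda>x. b x + (-1) * a x) = phi k xi n j lam b + phi k xi n j lam (\<lambda>x. (-1) * a x)"
              by (rule phi_add[OF ctx lam j b ma])
            also have "phi k xi n j lam (\<lambda>x. (-1) * a x) = (-1) * phi k xi n j lam a"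
              by (rule phi_cmult[OF ctx lam j a])
            finally have eq: "phi k xi n j lam (\<lambda>x. b x - a x) = phi k xi n j lam b - phi k xi n j lam a" by simp
            have "norm (phi k xi n j lam b - phi k xi n j lam a) \<le> C * normA k (\<lambda>x. b x - a x)"
              unfolding eq[symmetric] using C(2) Alg_diff[OF ctx a b] by blast
            also have "\<dots> \<le> C * (\<epsilon> / (C + 1))" using d C(1) by (intro mult_left_mono) auto
            also have "\<dots> < \<epsilon>" using C(1) e by (simp add: field_simps)
            finally show "norm (phi k xi n j lam b - phi k xi n j lam a) < \<epsilon>" .
          qed
        qed
      qed
    qed
  qed
  have P2: "\<forall>j\<in>{1..n}. \<forall>lam0. (\<forall>i\<in>{1..n}. lam0 i \<in> ball 0 (gam k xi)) \<longrightarrow>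
            (\<forall>\<epsilon>>0. \<exists>\<delta>>0. \<forall>lam. (\<forall>i\<in>{1..n}. lam i \<in> ball 0 (gam k xi)) \<and>
                 (\<forall>i\<in>{1..n}. dist (lam i) (lam0 i) < \<delta>) \<longrightarrow>
                 dnorm k (\<lambda>a. phi k xi n j lam a - phi k xi n j lam0 a) < \<epsilon>)"
    using phi_lam_cont[OF ctx] by blast
  show ?thesis using P1 P2 by blast
qed


end
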